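(* Let $W$ be an affine Weyl group, $x\in W$, and let $r_1,\dots,r_n$ be reflections with $H_{r_t}=H_{\alpha,c+t}$ ($1\le t\le n$) for some root $\alpha$ and $c\in\mathbb{Z}$, such that $\ell(r_t\cdots r_1x)>\ell(r_{t-1}\cdots r_1x)$ for all $1\le t\le n$. Then $H^{\mathbf 1}_{r_{t-1}}\subseteq H^{\mathbf 1}_{r_t}$ for all $3\le t\le n$.
   Context: $W$ is the affine Weyl group of a crystallographic root system $\Phi$ in Euclidean space $E$; for $\beta\in\Phi$, $k\in\mathbb{Z}$, $H_{\beta,k}=\{v:\langle v,\beta\rangle=k\}$ and $s_{\beta;k}$ is the orthogonal reflection in it; these are the reflections of $W$, and $H_r$ denotes the hyperplane of the reflection $r$. Elements of $W$ are identified with alcoves ($w\mapsto wA_0$, $A_0$ the fundamental alcove, identified with $1$). $\ell$ is Coxeter length. For a reflection $r$, $H^{\mathbf 1}_r=\{y\in W:\ell(ry)>\ell(y)\}$ is the set of alcoves on the same side of $H_r$ as the identity alcove, and $H^\infty_r=\{y\in W:\ell(ry)<\ell(y)\}$ is the other side. *)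

theory Defs
  imports "HOL-Analysis.Analysis"
begin

definition hyp :: "'a::euclidean_space \<Rightarrow> int \<Rightarrow> 'a set" where
  "hyp \<beta> k = {v. inner v \<beta> = of_int k}"

definition srefl :: "'a::euclidean_space \<Rightarrow> int \<Rightarrow> 'a \<Rightarrow> 'a" where
  "srefl \<beta> k v = v - ((inner v \<beta> - of_int k) * 2 / inner \<beta> \<beta>) *\<^sub>R \<beta>"

definition root_system :: "'a::euclidean_space set \<Rightarrow> bool" where
  "root_system \<Phi> \<longleftrightarrow> finite \<Phi> \<and> 0 \<notin> \<Phi> \<and> span \<Phi> = UNIV
     \<and> (\<forall>\<alpha>\<in>\<Phi>. \<forall>\<beta>\<in>\<Phi>. srefl \<alpha> 0 \<beta> \<in> \<Phi>)
     \<and> (\<forall>\<alpha>\<in>\<Phi>. \<forall>\<beta>\<in>\<Phi>. 2 * inner \<beta> \<alpha> / inner \<alpha> \<alpha> \<in> \<int>)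
     \<and> (\<forall>\<alpha>\<in>\<Phi>. \<forall>c::real. c *\<^sub>R \<alpha> \<in> \<Phi> \<longrightarrow> c = 1 \<or> c = -1)"

definition affine_reflections :: "'a::euclidean_space set \<Rightarrow> ('a \<Rightarrow> 'a) set" where
  "affine_reflections \<Phi> = {srefl \<beta> k | \<beta> k. \<beta> \<in> \<Phi>}"

inductive_set affine_weyl :: "'a::euclidean_space set \<Rightarrow> ('a \<Rightarrow> 'a) set" for \<Phi> where
  id_in: "id \<in> affine_weyl \<Phi>"
| step: "r \<in> affine_reflections \<Phi> \<Longrightarrow> w \<in> affine_weyl \<Phi> \<Longrightarrow> r \<circ> w \<in> affine_weyl \<Phi>"

definition hyperplanes :: "'a::euclidean_space set \<Rightarrow> 'a set set" where
  "hyperplanes \<Phi> = {hyp \<beta> k | \<beta> k. \<beta> \<in> \<Phi>}"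

text \<open>Fundamental alcove w.r.t. the positive system {beta. <beta,xi> > 0} (xi regular).\<close>
definition fund_alcove :: "'a::euclidean_space set \<Rightarrow> 'a \<Rightarrow> 'a set" where
  "fund_alcove \<Phi> \<xi> = {v. \<forall>\<beta>\<in>\<Phi>. inner \<beta> \<xi> > 0 \<longrightarrow> 0 < inner v \<beta> \<and> inner v \<beta> < 1}"

definition is_wall :: "'a::euclidean_space set \<Rightarrow> 'a \<Rightarrow> 'a set \<Rightarrow> bool" where
  "is_wall \<Phi> \<xi> H \<longleftrightarrow> H \<in> hyperplanes \<Phi> \<and>
     (\<exists>p \<in> closure (fund_alcove \<Phi> \<xi>) \<inter> H. \<forall>H' \<in> hyperplanes \<Phi>. p \<in> H' \<longrightarrow> H' = H)"

definition simple_refls :: "'a::euclidean_space set \<Rightarrow> 'a \<Rightarrow> ('a \<Rightarrow> 'a) set" where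
  "simple_refls \<Phi> \<xi> = {srefl \<beta> k | \<beta> k. \<beta> \<in> \<Phi> \<and> is_wall \<Phi> \<xi> (hyp \<beta> k)}"

definition coxeter_length :: "'a::euclidean_space set \<Rightarrow> 'a \<Rightarrow> ('a \<Rightarrow> 'a) \<Rightarrow> nat" where
  "coxeter_length \<Phi> \<xi> w = (LEAST n. \<exists>ws. length ws = n \<and> set ws \<subseteq> simple_refls \<Phi> \<xi>
                                          \<and> foldr (\<circ>) ws id = w)"

definition H1 :: "'a::euclidean_space set \<Rightarrow> 'a \<Rightarrow> ('a \<Rightarrow> 'a) \<Rightarrow> ('a \<Rightarrow> 'a) set" where
  "H1 \<Phi> \<xi> r = {y \<in> affine_weyl \<Phi>. coxeter_length \<Phi> \<xi> (r \<circ> y) > coxeter_length \<Phi> \<xi> y}"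

primrec rprod :: "(nat \<Rightarrow> 'b \<Rightarrow> 'b) \<Rightarrow> nat \<Rightarrow> ('b \<Rightarrow> 'b) \<Rightarrow> 'b \<Rightarrow> 'b" where
  "rprod r 0 x = x"
| "rprod r (Suc t) x = r (Suc t) \<circ> rprod r t x"

end

theory Submission
  imports Defs
begin
definition af :: "'a::euclidean_space \<Rightarrow> int \<Rightarrow> 'a \<Rightarrow> real" where
  "af \<beta> k v = inner v \<beta> - of_int k"

lemma srefl_af: "srefl \<beta> k v = v - (af \<beta> k v * 2 / inner \<beta> \<beta>) *\<^sub>R \<beta>"
  by (simp add: srefl_def af_def)

lemma hyp_af: "v \<in> hyp \<beta> k \<longleftrightarrow> af \<beta> k v = 0"
  by (simp add: hyp_def af_def)

lemma af_unique:
  assumes "\<forall>v. af \<beta> k v = af \<beta>' k' v"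
  shows "\<beta> = \<beta>' \<and> k = k'"
proof -
  have "af \<beta> k 0 = af \<beta>' k' 0" using assms by blast
  hence kk: "k = k'" by (simp add: af_def)
  have "af \<beta> k (\<beta> - \<beta>') = af \<beta>' k' (\<beta> - \<beta>')" using assms by blast
  hence "inner (\<beta> - \<beta>') (\<beta> - \<beta>') = 0" using kk by (simp add: af_def inner_diff_right)
  thus ?thesis using kk by simp
qed

lemma af_srefl_self:
  assumes "\<beta> \<noteq> 0" shows "af \<beta> k (srefl \<beta> k v) = - af \<beta> k v"
proof -
  have "inner \<beta> \<beta> \<noteq> 0" using assms by simp
  thus ?thesis unfolding srefl_af by (simp add: af_def inner_diff_left field_simps)
qed

lemma srefl_invol:
  assumes "\<beta> \<noteq> 0" shows "srefl \<beta> k (srefl \<beta> k v) = v"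
proof -
  define u where "u = srefl \<beta> k v"
  have "srefl \<beta> k u = u - (af \<beta> k u * 2 / inner \<beta> \<beta>) *\<^sub>R \<beta>" by (rule srefl_af)
  also have "af \<beta> k u = - af \<beta> k v" using af_srefl_self[OF assms] u_def by simp
  finally show ?thesis by (simp add: u_def srefl_af[of \<beta> k v])
qed

lemma srefl_fix:
  assumes "\<beta> \<noteq> 0" shows "srefl \<beta> k v = v \<longleftrightarrow> af \<beta> k v = 0"
  using assms by (simp add: srefl_af)

lemma af_neg: "af (-\<beta>) (-k) v = - af \<beta> k v"
  by (simp add: af_def)

lemma srefl_neg: "srefl (-\<beta>) (-k) = srefl \<beta> k"
proof (rule ext)
  fix v
  have "srefl (-\<beta>) (-k) v = v - (af (-\<beta>) (-k) v * 2 / inner (-\<beta>) (-\<beta>)) *\<^sub>R (-\<beta>)"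
    by (rule srefl_af)
  also have "\<dots> = v - (af \<beta> k v * 2 / inner \<beta> \<beta>) *\<^sub>R \<beta>" by (simp add: af_neg)
  finally show "srefl (-\<beta>) (-k) v = srefl \<beta> k v" by (simp add: srefl_af[of \<beta> k v])
qed

lemma srefl_dist: "dist (srefl \<beta> k a) (srefl \<beta> k b) = dist a b"
proof (cases "\<beta> = 0")
  case True thus ?thesis by (simp add: srefl_def)
next
  case False
  define x where "x = inner (a - b) \<beta> * 2 / inner \<beta> \<beta>"
  have G: "inner \<beta> \<beta> \<noteq> 0" using False by simp
  define ca where "ca = (inner a \<beta> - of_int k) * 2 / inner \<beta> \<beta>"
  define cb where "cb = (inner b \<beta> - of_int k) * 2 / inner \<beta> \<beta>"
  have e0: "srefl \<beta> k a - srefl \<beta> k b = (a - b) - (ca - cb) *\<^sub>R \<beta>"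
    by (simp add: srefl_def ca_def cb_def scaleR_diff_left algebra_simps)
  have "ca - cb = x" using G by (simp add: ca_def cb_def x_def inner_diff_left field_simps)
  hence e: "srefl \<beta> k a - srefl \<beta> k b = (a - b) - x *\<^sub>R \<beta>" using e0 by simp
  define d where "d = a - b"
  have xB: "x * inner \<beta> \<beta> = 2 * inner d \<beta>" using G by (simp add: x_def d_def)
  have "inner (d - x *\<^sub>R \<beta>) (d - x *\<^sub>R \<beta>) = inner d d - 2 * x * inner d \<beta> + x * (x * inner \<beta> \<beta>)"
    by (simp add: inner_diff_left inner_diff_right inner_commute algebra_simps)
  also have "\<dots> = inner d d" by (simp add: xB)
  finally have "inner ((a - b) - x *\<^sub>R \<beta>) ((a - b) - x *\<^sub>R \<beta>) = inner (a-b) (a-b)" by (simp add: d_def)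
  hence "norm ((a - b) - x *\<^sub>R \<beta>) = norm (a - b)" by (simp add: norm_eq_sqrt_inner)
  thus ?thesis using e by (simp add: dist_norm)
qed

lemma srefl_comm:
  fixes \<beta> \<gamma> :: "'a::euclidean_space"
  assumes g: "\<gamma> \<noteq> 0"
    and k1: "of_int k1 = of_int k - of_int m * (2 * inner \<beta> \<gamma> / inner \<gamma> \<gamma>)"
  shows "srefl \<beta> k (srefl \<gamma> m v) = srefl \<gamma> m (srefl (srefl \<gamma> 0 \<beta>) k1 v)"
proof -
  define G where "G = inner \<gamma> \<gamma>"
  define B where "B = inner \<beta> \<beta>"
  define P where "P = inner \<beta> \<gamma>"
  define a where "a = inner v \<beta>"
  define gg where "gg = inner v \<gamma>"
  define X where "X = (gg - of_int m) * 2 / G"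
  define F where "F = a - X * P - of_int k"
  have G0: "G \<noteq> 0" using g by (simp add: G_def)
  have s1: "srefl \<gamma> m v = v - X *\<^sub>R \<gamma>" by (simp add: srefl_def X_def gg_def G_def)
  have F: "af \<beta> k (srefl \<gamma> m v) = F"
    by (simp add: s1 af_def F_def a_def P_def inner_diff_left inner_commute[of \<gamma> \<beta>])
  have L0: "srefl \<beta> k (srefl \<gamma> m v) = srefl \<gamma> m v - (af \<beta> k (srefl \<gamma> m v) * 2 / B) *\<^sub>R \<beta>"
    by (simp add: srefl_af[of \<beta> k "srefl \<gamma> m v"] B_def)
  have L: "srefl \<beta> k (srefl \<gamma> m v) = v - X *\<^sub>R \<gamma> - (2 * F / B) *\<^sub>R \<beta>"
    unfolding L0 F by (simp add: s1 mult.commute)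
  define \<beta>1 where "\<beta>1 = srefl \<gamma> 0 \<beta>"
  have b1: "\<beta>1 = \<beta> - (2 * P / G) *\<^sub>R \<gamma>" by (simp add: \<beta>1_def srefl_def P_def G_def mult.commute)
  have B1: "inner \<beta>1 \<beta>1 = B" using G0
    by (simp add: b1 inner_diff_left inner_diff_right inner_commute B_def P_def[symmetric] G_def[symmetric] field_simps power2_eq_square)
  have F1: "af \<beta>1 k1 v = F" using G0
    by (simp add: b1 af_def k1 F_def X_def a_def gg_def inner_diff_right P_def G_def inner_commute field_simps)
  have u: "srefl \<beta>1 k1 v = v - (2 * F / B) *\<^sub>R \<beta> + ((2 * F / B) * (2 * P / G)) *\<^sub>R \<gamma>"
  proof -
    have "srefl \<beta>1 k1 v = v - (af \<beta>1 k1 v * 2 / inner \<beta>1 \<beta>1) *\<^sub>R \<beta>1" by (rule srefl_af)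
    also have "\<dots> = v - (2 * F / B) *\<^sub>R (\<beta> - (2 * P / G) *\<^sub>R \<gamma>)"
      unfolding F1 B1 using b1 by (simp add: mult.commute)
    finally show ?thesis by (simp add: scaleR_diff_right algebra_simps)
  qed
  have ug: "inner (srefl \<beta>1 k1 v) \<gamma> = gg + (2 * F / B) * P" using G0
    by (simp add: u inner_diff_left inner_add_left gg_def P_def G_def[symmetric] field_simps)
  have R: "srefl \<gamma> m (srefl \<beta>1 k1 v) = v - X *\<^sub>R \<gamma> - (2 * F / B) *\<^sub>R \<beta>"
  proof -
    have "srefl \<gamma> m (srefl \<beta>1 k1 v) = srefl \<beta>1 k1 v - ((inner (srefl \<beta>1 k1 v) \<gamma> - of_int m) * 2 / G) *\<^sub>R \<gamma>"
      by (simp add: srefl_def G_def)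
    also have "(inner (srefl \<beta>1 k1 v) \<gamma> - of_int m) * 2 / G = X + (2 * F / B) * (2 * P / G)"
      using G0 by (simp add: ug X_def field_simps)
    finally show ?thesis by (simp add: u algebra_simps)
  qed
  show ?thesis using L R by (simp add: \<beta>1_def)
qed

lemma foldr_comp: "foldr (\<circ>) xs g = foldr (\<circ>) xs id \<circ> g"
  by (induction xs) (auto simp: o_assoc)

locale aw =
  fixes \<Phi> :: "'a::euclidean_space set" and \<xi> :: 'a
  assumes rs: "root_system \<Phi>" and reg: "\<forall>\<beta>\<in>\<Phi>. inner \<beta> \<xi> \<noteq> 0"
begin

abbreviation "W \<equiv> affine_weyl \<Phi>"
abbreviation "A0 \<equiv> fund_alcove \<Phi> \<xi>"
abbreviation "S \<equiv> simple_refls \<Phi> \<xi>"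
abbreviation "len \<equiv> coxeter_length \<Phi> \<xi>"

lemma fin: "finite \<Phi>" using rs by (simp add: root_system_def)
lemma nz: "\<beta> \<in> \<Phi> \<Longrightarrow> \<beta> \<noteq> 0" using rs unfolding root_system_def by metis
lemma refl_cl: "\<alpha> \<in> \<Phi> \<Longrightarrow> \<beta> \<in> \<Phi> \<Longrightarrow> srefl \<alpha> 0 \<beta> \<in> \<Phi>"
  using rs by (simp add: root_system_def)
lemma neg: "\<beta> \<in> \<Phi> \<Longrightarrow> -\<beta> \<in> \<Phi>"
proof -
  assume b: "\<beta> \<in> \<Phi>"
  have "srefl \<beta> 0 \<beta> = -\<beta>" using nz[OF b] by (simp add: srefl_def scaleR_2)
  thus ?thesis using refl_cl[OF b b] by simp
qed
lemma cint: "\<alpha> \<in> \<Phi> \<Longrightarrow> \<beta> \<in> \<Phi> \<Longrightarrow> \<exists>n::int. 2 * inner \<beta> \<alpha> / inner \<alpha> \<alpha> = of_int n"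
proof -
  assume "\<alpha> \<in> \<Phi>" "\<beta> \<in> \<Phi>"
  hence "2 * inner \<beta> \<alpha> / inner \<alpha> \<alpha> \<in> \<int>" using rs by (simp add: root_system_def)
  thus ?thesis by (metis Ints_cases)
qed
lemma reduced: "\<beta> \<in> \<Phi> \<Longrightarrow> c *\<^sub>R \<beta> \<in> \<Phi> \<Longrightarrow> c = 1 \<or> c = -1"
  using rs by (simp add: root_system_def)

lemma samehyp:
  assumes b: "\<beta> \<in> \<Phi>" and b': "\<beta>' \<in> \<Phi>" and h: "\<forall>v. af \<beta> k v = 0 \<longleftrightarrow> af \<beta>' k' v = 0"
  shows "(\<beta>' = \<beta> \<and> k' = k) \<or> (\<beta>' = -\<beta> \<and> k' = -k)"
proof -
  define B where "B = inner \<beta> \<beta>"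
  have B0: "B \<noteq> 0" using nz[OF b] by (simp add: B_def)
  define v0 where "v0 = (of_int k / B) *\<^sub>R \<beta>"
  have "af \<beta> k v0 = 0" using B0 by (simp add: af_def v0_def B_def)
  hence a0: "inner v0 \<beta>' = of_int k'" using h by (simp add: af_def)
  define l where "l = inner \<beta>' \<beta> / B"
  define w where "w = \<beta>' - l *\<^sub>R \<beta>"
  have wb: "inner w \<beta> = 0" using B0 by (simp add: w_def l_def B_def inner_diff_left)
  have "af \<beta> k (v0 + w) = 0" using B0 wb by (simp add: af_def v0_def B_def inner_add_left)
  hence "inner (v0 + w) \<beta>' = of_int k'" using h by (simp add: af_def)
  hence wb': "inner w \<beta>' = 0" using a0 by (simp add: inner_add_left)
  have "inner w w = inner w \<beta>' - l * inner w \<beta>" by (simp add: w_def inner_diff_right)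
  hence "inner w w = 0" using wb wb' by simp
  hence "w = 0" by simp
  hence bl: "\<beta>' = l *\<^sub>R \<beta>" by (simp add: w_def)
  hence "l = 1 \<or> l = -1" using reduced[OF b] b' by simp
  moreover have "of_int k' = l * of_int k" using a0 bl B0 by (simp add: v0_def B_def)
  ultimately show ?thesis using bl by auto
qed

lemma hyp_eq_iff:
  assumes "\<beta> \<in> \<Phi>" "\<beta>' \<in> \<Phi>"
  shows "hyp \<beta> k = hyp \<beta>' k' \<longleftrightarrow> (\<beta>' = \<beta> \<and> k' = k) \<or> (\<beta>' = -\<beta> \<and> k' = -k)"
proof
  assume "hyp \<beta> k = hyp \<beta>' k'"
  hence "\<forall>v. af \<beta> k v = 0 \<longleftrightarrow> af \<beta>' k' v = 0" by (metis hyp_af)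
  thus "(\<beta>' = \<beta> \<and> k' = k) \<or> (\<beta>' = -\<beta> \<and> k' = -k)" using samehyp assms by blast
next
  assume "(\<beta>' = \<beta> \<and> k' = k) \<or> (\<beta>' = -\<beta> \<and> k' = -k)"
  thus "hyp \<beta> k = hyp \<beta>' k'" by (auto simp: hyp_af af_neg)
qed

lemma af_srefl_root:
  assumes g: "\<gamma> \<in> \<Phi>" and b: "\<beta> \<in> \<Phi>"
  shows "\<exists>\<beta>'\<in>\<Phi>. \<exists>k'. (\<forall>v. af \<beta> k (srefl \<gamma> m v) = af \<beta>' k' v)
           \<and> srefl \<beta> k \<circ> srefl \<gamma> m = srefl \<gamma> m \<circ> srefl \<beta>' k'"
proof -
  obtain n where n: "2 * inner \<beta> \<gamma> / inner \<gamma> \<gamma> = of_int n" using cint[OF g b] by blast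
  have G: "inner \<gamma> \<gamma> \<noteq> 0" using nz[OF g] by simp
  define k' where "k' = k - m * n"
  have k'r: "of_int k' = of_int k - of_int m * (2 * inner \<beta> \<gamma> / inner \<gamma> \<gamma>)" by (simp add: k'_def n)
  have "\<forall>v. af \<beta> k (srefl \<gamma> m v) = af (srefl \<gamma> 0 \<beta>) k' v"
  proof
    fix v
    show "af \<beta> k (srefl \<gamma> m v) = af (srefl \<gamma> 0 \<beta>) k' v"
      unfolding af_def k'r using G
      by (simp add: srefl_def inner_diff_left inner_diff_right inner_commute field_simps)
  qed
  moreover have "srefl \<beta> k \<circ> srefl \<gamma> m = srefl \<gamma> m \<circ> srefl (srefl \<gamma> 0 \<beta>) k'"
    using srefl_comm[OF nz[OF g] k'r] by (simp add: fun_eq_iff)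
  ultimately show ?thesis using refl_cl[OF g b] by blast
qed

lemma refl_W: "r \<in> affine_reflections \<Phi> \<Longrightarrow> r \<in> W"
  using affine_weyl.step[OF _ affine_weyl.id_in] by simp

lemma W_comp: "w1 \<in> W \<Longrightarrow> w2 \<in> W \<Longrightarrow> w1 \<circ> w2 \<in> W"
proof (induction rule: affine_weyl.induct)
  case id_in thus ?case by simp
next
  case (step r w)
  thus ?case by (metis o_assoc affine_weyl.step)
qed

lemma refl_invol: "r \<in> affine_reflections \<Phi> \<Longrightarrow> r \<circ> r = id"
  by (auto simp: affine_reflections_def fun_eq_iff srefl_invol nz)

lemma S_sub: "S \<subseteq> affine_reflections \<Phi>"
  by (auto simp: simple_refls_def affine_reflections_def)

lemma word_W: "set ws \<subseteq> affine_reflections \<Phi> \<Longrightarrow> foldr (\<circ>) ws id \<in> W"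
  by (induction ws) (auto intro: affine_weyl.intros)

lemma word_inv: "set ws \<subseteq> affine_reflections \<Phi> \<Longrightarrow>
   foldr (\<circ>) ws id \<circ> foldr (\<circ>) (rev ws) id = id \<and> foldr (\<circ>) (rev ws) id \<circ> foldr (\<circ>) ws id = id"
proof (induction ws)
  case Nil thus ?case by simp
next
  case (Cons r ws)
  have rr: "r \<circ> r = id" using Cons.prems refl_invol by simp
  have e: "foldr (\<circ>) (rev (r # ws)) id = foldr (\<circ>) (rev ws) id \<circ> r"
    by (simp add: foldr_comp[of "rev ws" r])
  have sub: "set ws \<subseteq> affine_reflections \<Phi>" using Cons.prems by simp
  note IH = conjunct1[OF Cons.IH[OF sub]] conjunct2[OF Cons.IH[OF sub]]
  have f: "foldr (\<circ>) (r # ws) id = r \<circ> foldr (\<circ>) ws id" by simp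
  have 1: "(r \<circ> foldr (\<circ>) ws id) \<circ> (foldr (\<circ>) (rev ws) id \<circ> r) = id"
    by (metis (no_types, lifting) IH(1) rr comp_assoc comp_id)
  have 2: "(foldr (\<circ>) (rev ws) id \<circ> r) \<circ> (r \<circ> foldr (\<circ>) ws id) = id"
    by (metis (no_types, lifting) IH(2) rr comp_assoc id_comp)
  show ?case unfolding e f using 1 2 by blast
qed

lemma W_pull: "w \<in> W \<Longrightarrow> \<forall>\<beta>\<in>\<Phi>. \<forall>k. \<exists>\<beta>'\<in>\<Phi>. \<exists>k'. \<forall>v. af \<beta> k (w v) = af \<beta>' k' v"
proof (induction rule: affine_weyl.induct)
  case id_in thus ?case by auto
next
  case (step r w)
  show ?case
  proof (intro ballI allI)
    fix \<beta> k assume b: "\<beta> \<in> \<Phi>"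
    obtain \<gamma> m where r: "r = srefl \<gamma> m" "\<gamma> \<in> \<Phi>" using step.hyps(1) by (auto simp: affine_reflections_def)
    obtain \<beta>1 k1 where 1: "\<beta>1 \<in> \<Phi>" "\<forall>v. af \<beta> k (srefl \<gamma> m v) = af \<beta>1 k1 v"
      using af_srefl_root[OF r(2) b] by blast
    obtain \<beta>2 k2 where 2: "\<beta>2 \<in> \<Phi>" "\<forall>v. af \<beta>1 k1 (w v) = af \<beta>2 k2 v" using step.IH 1(1) by blast
    show "\<exists>\<beta>'\<in>\<Phi>. \<exists>k'. \<forall>v. af \<beta> k ((r \<circ> w) v) = af \<beta>' k' v"
      using 1 2 r by auto
  qed
qed

lemma W_conj: "w \<in> W \<Longrightarrow> \<forall>\<beta>\<in>\<Phi>. \<forall>k \<beta>' k'. (\<forall>v. af \<beta> k (w v) = af \<beta>' k' v) \<longrightarrow> srefl \<beta> k \<circ> w = w \<circ> srefl \<beta>' k'"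
proof (induction rule: affine_weyl.induct)
  case id_in
  show ?case
  proof (intro ballI allI impI)
    fix \<beta> k \<beta>' k' assume "\<forall>v. af \<beta> k (id v) = af \<beta>' k' v"
    hence "\<beta> = \<beta>' \<and> k = k'" using af_unique by simp
    thus "srefl \<beta> k \<circ> id = id \<circ> srefl \<beta>' k'" by simp
  qed
next
  case (step r w)
  show ?case
  proof (intro ballI allI impI)
    fix \<beta> k \<beta>' k' assume b: "\<beta> \<in> \<Phi>" and h: "\<forall>v. af \<beta> k ((r \<circ> w) v) = af \<beta>' k' v"
    obtain \<gamma> m where r: "r = srefl \<gamma> m" "\<gamma> \<in> \<Phi>" using step.hyps(1) by (auto simp: affine_reflections_def)
    obtain \<beta>1 k1 where 1: "\<beta>1 \<in> \<Phi>" "\<forall>v. af \<beta> k (srefl \<gamma> m v) = af \<beta>1 k1 v"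
       "srefl \<beta> k \<circ> srefl \<gamma> m = srefl \<gamma> m \<circ> srefl \<beta>1 k1"
      using af_srefl_root[OF r(2) b] by blast
    have "\<forall>v. af \<beta>1 k1 (w v) = af \<beta>' k' v" using h 1(2) r by simp
    hence "srefl \<beta>1 k1 \<circ> w = w \<circ> srefl \<beta>' k'" using step.IH 1(1) by blast
    thus "srefl \<beta> k \<circ> (r \<circ> w) = (r \<circ> w) \<circ> srefl \<beta>' k'"
      using 1(3) r by (metis comp_assoc)
  qed
qed

lemma W_dist: "w \<in> W \<Longrightarrow> dist (w a) (w b) = dist a b"
  by (induction arbitrary: a b rule: affine_weyl.induct) (auto simp: affine_reflections_def srefl_dist)

end

definition dz :: "real \<Rightarrow> real" where
  "dz x = (if x \<in> \<int> then 1 else min (x - of_int \<lfloor>x\<rfloor>) (of_int \<lfloor>x\<rfloor> + 1 - x))"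

lemma dz_pos: "dz x > 0"
proof (cases "x \<in> \<int>")
  case False
  have "of_int \<lfloor>x\<rfloor> \<noteq> x" using False by (metis Ints_of_int)
  hence "of_int \<lfloor>x\<rfloor> < x" using of_int_floor_le[of x] by linarith
  moreover have "x < of_int \<lfloor>x\<rfloor> + 1" by linarith
  ultimately show ?thesis using False by (simp add: dz_def)
qed (simp add: dz_def)

lemma dz_le: assumes "x \<noteq> of_int k" shows "dz x \<le> \<bar>x - of_int k\<bar>"
proof (cases "x \<in> \<int>")
  case True
  then obtain j where j: "x = of_int j" by (metis Ints_cases)
  hence "j \<noteq> k" using assms by simp
  hence "1 \<le> \<bar>j - k\<bar>" by (cases "j < k") auto
  hence "(1::real) \<le> of_int \<bar>j - k\<bar>" by linarith
  hence "1 \<le> \<bar>real_of_int j - of_int k\<bar>" by simp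
  thus ?thesis using True j by (simp add: dz_def)
next
  case False
  have "k \<le> \<lfloor>x\<rfloor> \<or> \<lfloor>x\<rfloor> + 1 \<le> k" by linarith
  thus ?thesis
  proof
    assume "k \<le> \<lfloor>x\<rfloor>"
    hence "of_int k \<le> (of_int \<lfloor>x\<rfloor> :: real)" by simp
    moreover have "of_int \<lfloor>x\<rfloor> \<le> x" by simp
    ultimately show ?thesis using False by (simp add: dz_def)
  next
    assume "\<lfloor>x\<rfloor> + 1 \<le> k"
    hence "of_int \<lfloor>x\<rfloor> + 1 \<le> (of_int k :: real)" by linarith
    moreover have "x < of_int \<lfloor>x\<rfloor> + 1" by linarith
    ultimately show ?thesis using False by (simp add: dz_def)
  qed
qed

lemma avoid_hyps:
  fixes n :: "'i \<Rightarrow> 'a::euclidean_space"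
  assumes "finite I" "open U" "U \<noteq> {}" "\<forall>i\<in>I. n i \<noteq> 0"
  shows "\<exists>u\<in>U. \<forall>i\<in>I. inner u (n i) \<noteq> b i"
  using assms
proof (induction I arbitrary: U rule: finite_induct)
  case empty thus ?case by auto
next
  case (insert i I)
  define U' where "U' = U - {v. inner (n i) v = b i}"
  have o: "open U'" unfolding U'_def using insert.prems(1) closed_hyperplane by (rule open_Diff)
  obtain u where u: "u \<in> U" using insert.prems(2) by blast
  obtain e where e: "e > 0" "ball u e \<subseteq> U" using insert.prems(1) u open_contains_ball by blast
  have ni: "n i \<noteq> 0" using insert.prems(3) by simp
  define d where "d = e / (2 * norm (n i))"
  have d0: "d > 0" using e ni by (simp add: d_def)
  have "dist u (u + d *\<^sub>R n i) < e" using e ni by (simp add: dist_norm d_def)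
  hence u2: "u + d *\<^sub>R n i \<in> U" using e by auto
  have "U' \<noteq> {}"
  proof
    assume "U' = {}"
    hence "inner (n i) u = b i" "inner (n i) (u + d *\<^sub>R n i) = b i" using u u2 by (auto simp: U'_def)
    hence "d * inner (n i) (n i) = 0" by (simp add: inner_add_right)
    thus False using d0 ni by simp
  qed
  then obtain v where v: "v \<in> U'" "\<forall>j\<in>I. inner v (n j) \<noteq> b j"
    using insert.IH[OF o] insert.prems(3) by blast
  have "inner v (n i) \<noteq> b i" using v(1) by (simp add: U'_def inner_commute)
  thus ?case using v U'_def by auto
qed

lemma finite_pairs:
  assumes "finite \<Phi>"
  shows "finite {(\<beta>, k::int). \<beta> \<in> \<Phi> \<and> \<bar>real_of_int k\<bar> \<le> M \<beta>}"
proof (rule finite_subset)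
  show "{(\<beta>, k::int). \<beta> \<in> \<Phi> \<and> \<bar>real_of_int k\<bar> \<le> M \<beta>} \<subseteq> Sigma \<Phi> (\<lambda>\<beta>. {-\<lceil>M \<beta>\<rceil>..\<lceil>M \<beta>\<rceil>})"
  proof clarsimp
    fix \<beta> k assume "\<bar>real_of_int k\<bar> \<le> M \<beta>"
    hence "real_of_int k \<le> M \<beta>" "- M \<beta> \<le> real_of_int k" by linarith+
    have "k \<le> \<lceil>M \<beta>\<rceil>" unfolding le_ceiling_iff using \<open>real_of_int k \<le> M \<beta>\<close> by linarith
    moreover have "-k \<le> \<lceil>M \<beta>\<rceil>" unfolding le_ceiling_iff using \<open>- M \<beta> \<le> real_of_int k\<close> by simp
    ultimately show "- \<lceil>M \<beta>\<rceil> \<le> k \<and> k \<le> \<lceil>M \<beta>\<rceil>" by simp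
  qed
  show "finite (Sigma \<Phi> (\<lambda>\<beta>. {-\<lceil>M \<beta>\<rceil>..\<lceil>M \<beta>\<rceil>}))" using assms by auto
qed

lemma pos_trans: "(x::real) * y > 0 \<Longrightarrow> y * z > 0 \<Longrightarrow> x * z > 0"
  by (auto simp: zero_less_mult_iff)

lemma pos_sym: "(x::real) * y > 0 \<Longrightarrow> y * x > 0"
  by (simp add: mult.commute)

context aw begin

lemma A0_same:
  assumes p: "p \<in> A0" and q: "q \<in> A0" and b: "\<beta> \<in> \<Phi>"
  shows "af \<beta> k p * af \<beta> k q > 0"
proof (cases "inner \<beta> \<xi> > 0")
  case True
  have "0 < inner p \<beta>" "inner p \<beta> < 1" "0 < inner q \<beta>" "inner q \<beta> < 1"
    using p q b True by (auto simp: fund_alcove_def)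
  note ii = this
  show ?thesis
  proof (cases "k \<le> 0")
    case True
    hence "real_of_int k \<le> 0" by simp
    hence "af \<beta> k p > 0" "af \<beta> k q > 0" using ii by (auto simp: af_def)
    thus ?thesis by simp
  next
    case False
    hence "real_of_int k \<ge> 1" by simp
    hence "af \<beta> k p < 0" "af \<beta> k q < 0" using ii by (auto simp: af_def)
    thus ?thesis by (simp add: mult_neg_neg)
  qed
next
  case False
  hence "inner (-\<beta>) \<xi> > 0" using reg b by (simp add: order_less_le)
  hence "0 < inner p (-\<beta>)" "inner p (-\<beta>) < 1" "0 < inner q (-\<beta>)" "inner q (-\<beta>) < 1"
    using p q neg[OF b] by (auto simp: fund_alcove_def simp del: inner_minus_left inner_minus_right)
  hence "-1 < inner p \<beta>" "inner p \<beta> < 0" "-1 < inner q \<beta>" "inner q \<beta> < 0" by auto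
  note ii = this
  show ?thesis
  proof (cases "k \<le> -1")
    case True
    hence "real_of_int k \<le> -1" by simp
    hence "af \<beta> k p > 0" "af \<beta> k q > 0" using ii by (auto simp: af_def)
    thus ?thesis by simp
  next
    case False
    hence "real_of_int k \<ge> 0" by simp
    hence "af \<beta> k p < 0" "af \<beta> k q < 0" using ii by (auto simp: af_def)
    thus ?thesis by (simp add: mult_neg_neg)
  qed
qed

lemma A0_off: "p \<in> A0 \<Longrightarrow> \<beta> \<in> \<Phi> \<Longrightarrow> af \<beta> k p \<noteq> 0"
  using A0_same[of p p \<beta> k] by auto

lemma A0_char:
  assumes p: "p \<in> A0" and h: "\<forall>\<beta>\<in>\<Phi>. \<forall>k. af \<beta> k p * af \<beta> k q > 0"
  shows "q \<in> A0"
  unfolding fund_alcove_def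
proof (intro CollectI ballI impI)
  fix \<beta> assume b: "\<beta> \<in> \<Phi>" "0 < inner \<beta> \<xi>"
  have "0 < inner p \<beta>" "inner p \<beta> < 1" using p b by (auto simp: fund_alcove_def)
  moreover have "af \<beta> 0 p * af \<beta> 0 q > 0" "af \<beta> 1 p * af \<beta> 1 q > 0" using h b by auto
  ultimately show "0 < inner q \<beta> \<and> inner q \<beta> < 1" unfolding af_def
    by (auto simp: zero_less_mult_iff)
qed

lemma A0_open: "open A0"
proof -
  have "A0 = (\<Inter>\<beta>\<in>{\<beta>\<in>\<Phi>. 0 < inner \<beta> \<xi>}. {v. inner \<beta> v > 0} \<inter> {v. inner \<beta> v < 1})"
    by (auto simp: fund_alcove_def inner_commute)
  moreover have "open (\<Inter>\<beta>\<in>{\<beta>\<in>\<Phi>. 0 < inner \<beta> \<xi>}. {v. inner \<beta> v > 0} \<inter> {v. inner \<beta> v < 1})"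
    using fin by (intro open_INT) (auto intro: open_Int open_halfspace_lt open_halfspace_gt)
  ultimately show ?thesis by simp
qed

lemma A0_ne: "\<exists>p. p \<in> A0"
proof -
  define T where "T = (\<Sum>\<beta>\<in>\<Phi>. \<bar>inner \<beta> \<xi>\<bar>)"
  have T0: "T \<ge> 0" by (simp add: T_def sum_nonneg)
  define e where "e = 1 / (1 + T)"
  have e0: "e > 0" using T0 by (simp add: e_def)
  have "e *\<^sub>R \<xi> \<in> A0" unfolding fund_alcove_def
  proof (intro CollectI ballI impI)
    fix \<beta> assume b: "\<beta> \<in> \<Phi>" "0 < inner \<beta> \<xi>"
    have "\<bar>inner \<beta> \<xi>\<bar> \<le> T" unfolding T_def using member_le_sum[of \<beta> \<Phi> "\<lambda>\<beta>. \<bar>inner \<beta> \<xi>\<bar>"] fin b(1) by simp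
    hence "inner \<beta> \<xi> < 1 + T" by simp
    hence "e * inner \<beta> \<xi> < 1" using T0 by (simp add: e_def field_simps)
    thus "0 < inner (e *\<^sub>R \<xi>) \<beta> \<and> inner (e *\<^sub>R \<xi>) \<beta> < 1" using e0 b by (simp add: inner_commute)
  qed
  thus ?thesis by blast
qed

lemma loc_fin: "\<exists>\<epsilon>>0. \<forall>\<beta>\<in>\<Phi>. \<forall>k. af \<beta> k z = 0 \<or> \<epsilon> * norm \<beta> \<le> \<bar>af \<beta> k z\<bar>"
proof -
  define E where "E = insert 1 ((\<lambda>\<beta>. dz (inner z \<beta>) / norm \<beta>) ` \<Phi>)"
  have fE: "finite E" using fin by (simp add: E_def)
  have pE: "\<forall>x\<in>E. x > 0" using nz dz_pos by (auto simp: E_def)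
  define e where "e = Min E"
  have e0: "e > 0" using fE pE by (simp add: e_def E_def)
  show ?thesis
  proof (intro exI conjI ballI allI)
    show "e > 0" by (rule e0)
    fix \<beta> k assume b: "\<beta> \<in> \<Phi>"
    show "af \<beta> k z = 0 \<or> e * norm \<beta> \<le> \<bar>af \<beta> k z\<bar>"
    proof (cases "af \<beta> k z = 0")
      case False
      have "e \<le> dz (inner z \<beta>) / norm \<beta>" unfolding e_def using fE b by (auto simp: E_def)
      hence "e * norm \<beta> \<le> dz (inner z \<beta>)" using nz[OF b] by (simp add: field_simps)
      also have "\<dots> \<le> \<bar>af \<beta> k z\<bar>" using False by (simp add: af_def dz_le)
      finally show ?thesis by simp
    qed simp
  qed
qed

lemma af_lip: "\<bar>af \<beta> k v - af \<beta> k z\<bar> \<le> dist v z * norm \<beta>"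
proof -
  have "af \<beta> k v - af \<beta> k z = inner (v - z) \<beta>" by (simp add: af_def inner_diff_left)
  thus ?thesis using Cauchy_Schwarz_ineq2[of "v - z" \<beta>] by (simp add: dist_norm)
qed

lemma loc_fin2: "\<exists>\<epsilon>>0. \<forall>\<beta>\<in>\<Phi>. \<forall>k v. af \<beta> k z \<noteq> 0 \<longrightarrow> dist v z < \<epsilon> \<longrightarrow> af \<beta> k v * af \<beta> k z > 0"
proof -
  obtain e where e: "e > 0" "\<forall>\<beta>\<in>\<Phi>. \<forall>k. af \<beta> k z = 0 \<or> e * norm \<beta> \<le> \<bar>af \<beta> k z\<bar>"
    using loc_fin by blast
  show ?thesis
  proof (intro exI conjI ballI allI impI)
    show "e > 0" by (rule e(1))
    fix \<beta> k v assume b: "\<beta> \<in> \<Phi>" and a: "af \<beta> k z \<noteq> 0" and d: "dist v z < e"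
    have "e * norm \<beta> \<le> \<bar>af \<beta> k z\<bar>" using e(2) a b by blast
    moreover have "dist v z * norm \<beta> < e * norm \<beta>" using d nz[OF b] by simp
    moreover have "\<bar>af \<beta> k v - af \<beta> k z\<bar> \<le> dist v z * norm \<beta>" by (rule af_lip)
    ultimately have "\<bar>af \<beta> k v - af \<beta> k z\<bar> < \<bar>af \<beta> k z\<bar>" by linarith
    hence "(af \<beta> k v > 0 \<and> af \<beta> k z > 0) \<or> (af \<beta> k v < 0 \<and> af \<beta> k z < 0)" by linarith
    thus "af \<beta> k v * af \<beta> k z > 0" by (auto simp: zero_less_mult_iff)
  qed
qed

definition sep :: "'a \<Rightarrow> 'a \<Rightarrow> ('a \<times> int) set" where
  "sep p c = {(\<beta>, k). \<beta> \<in> \<Phi> \<and> af \<beta> k p * af \<beta> k c < 0}"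

lemma sep_finite: "finite (sep p c)"
proof (rule finite_subset)
  show "sep p c \<subseteq> {(\<beta>, k). \<beta> \<in> \<Phi> \<and> \<bar>real_of_int k\<bar> \<le> (norm p + norm c) * norm \<beta>}"
  proof clarify
    fix \<beta> k assume "(\<beta>, k) \<in> sep p c"
    hence b: "\<beta> \<in> \<Phi>" and s: "af \<beta> k p * af \<beta> k c < 0" by (auto simp: sep_def)
    have "\<bar>inner p \<beta>\<bar> \<le> norm p * norm \<beta>" "\<bar>inner c \<beta>\<bar> \<le> norm c * norm \<beta>"
      by (rule Cauchy_Schwarz_ineq2)+
    moreover have "min (inner p \<beta>) (inner c \<beta>) \<le> of_int k \<and> of_int k \<le> max (inner p \<beta>) (inner c \<beta>)"
    proof -
      have "(af \<beta> k p < 0 \<and> af \<beta> k c > 0) \<or> (af \<beta> k p > 0 \<and> af \<beta> k c < 0)"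
        using s by (auto simp: mult_less_0_iff)
      thus ?thesis unfolding af_def by auto
    qed
    ultimately show "\<beta> \<in> \<Phi> \<and> \<bar>real_of_int k\<bar> \<le> (norm p + norm c) * norm \<beta>"
      using b by (auto simp: distrib_right)
  qed
  show "finite {(\<beta>, k). \<beta> \<in> \<Phi> \<and> \<bar>real_of_int k\<bar> \<le> (norm p + norm c) * norm \<beta>}"
    using fin by (rule finite_pairs)
qed

lemma wall_point:
  assumes b0: "\<beta>0 \<in> \<Phi>" and w: "is_wall \<Phi> \<xi> (hyp \<beta>0 k0)"
  shows "\<exists>z\<in>closure A0. af \<beta>0 k0 z = 0 \<and>
     (\<forall>\<beta>\<in>\<Phi>. \<forall>k. af \<beta> k z = 0 \<longrightarrow> (\<beta> = \<beta>0 \<and> k = k0) \<or> (\<beta> = -\<beta>0 \<and> k = -k0))"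
proof -
  obtain z where z: "z \<in> closure A0" "z \<in> hyp \<beta>0 k0"
    "\<forall>H'\<in>hyperplanes \<Phi>. z \<in> H' \<longrightarrow> H' = hyp \<beta>0 k0"
    using w unfolding is_wall_def by blast
  have "\<forall>\<beta>\<in>\<Phi>. \<forall>k. af \<beta> k z = 0 \<longrightarrow> (\<beta> = \<beta>0 \<and> k = k0) \<or> (\<beta> = -\<beta>0 \<and> k = -k0)"
  proof (intro ballI allI impI)
    fix \<beta> k assume b: "\<beta> \<in> \<Phi>" and a: "af \<beta> k z = 0"
    have "hyp \<beta> k \<in> hyperplanes \<Phi>" using b by (auto simp: hyperplanes_def)
    hence "hyp \<beta> k = hyp \<beta>0 k0" using z(3) a by (simp add: hyp_af)
    hence "(\<beta>0 = \<beta> \<and> k0 = k) \<or> (\<beta>0 = -\<beta> \<and> k0 = -k)" using hyp_eq_iff[OF b b0] by simp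
    thus "(\<beta> = \<beta>0 \<and> k = k0) \<or> (\<beta> = -\<beta>0 \<and> k = -k0)" by auto
  qed
  thus ?thesis using z by (auto simp: hyp_af)
qed

lemma simple_sep:
  assumes b0: "\<beta>0 \<in> \<Phi>" and w: "is_wall \<Phi> \<xi> (hyp \<beta>0 k0)" and p: "p \<in> A0" and b: "\<beta> \<in> \<Phi>"
    and s: "af \<beta> k p * af \<beta> k (srefl \<beta>0 k0 p) < 0"
  shows "(\<beta> = \<beta>0 \<and> k = k0) \<or> (\<beta> = -\<beta>0 \<and> k = -k0)"
proof (rule ccontr)
  assume nh: "\<not> ?thesis"
  obtain z where z: "z \<in> closure A0" "af \<beta>0 k0 z = 0"
     "\<forall>\<beta>\<in>\<Phi>. \<forall>k. af \<beta> k z = 0 \<longrightarrow> (\<beta> = \<beta>0 \<and> k = k0) \<or> (\<beta> = -\<beta>0 \<and> k = -k0)"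
    using wall_point[OF b0 w] by blast
  have az: "af \<beta> k z \<noteq> 0" using z(3) nh b by blast
  obtain e where e: "e > 0" "\<forall>\<beta>\<in>\<Phi>. \<forall>k v. af \<beta> k z \<noteq> 0 \<longrightarrow> dist v z < e \<longrightarrow> af \<beta> k v * af \<beta> k z > 0"
    using loc_fin2 by blast
  obtain p' where p': "p' \<in> A0" "dist p' z < e" using z(1) e(1) closure_approachable by blast
  have sz: "srefl \<beta>0 k0 z = z" using z(2) srefl_fix[OF nz[OF b0]] by simp
  have "dist (srefl \<beta>0 k0 p') z < e" using p'(2) srefl_dist[of \<beta>0 k0 p' z] sz by simp
  hence 1: "af \<beta> k (srefl \<beta>0 k0 p') * af \<beta> k z > 0" using e(2) b az by blast
  have 2: "af \<beta> k p' * af \<beta> k z > 0" using e(2) b az p'(2) by blast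
  have 3: "af \<beta> k p * af \<beta> k p' > 0" using A0_same[OF p p'(1) b] .
  obtain \<beta>' k' where bk: "\<beta>' \<in> \<Phi>" "\<forall>v. af \<beta> k (srefl \<beta>0 k0 v) = af \<beta>' k' v"
    using af_srefl_root[OF b0 b] by blast
  have 4: "af \<beta> k (srefl \<beta>0 k0 p) * af \<beta> k (srefl \<beta>0 k0 p') > 0"
    using A0_same[OF p p'(1) bk(1)] bk(2) by simp
  have "af \<beta> k p * af \<beta> k (srefl \<beta>0 k0 p) > 0"
    by (meson 1 2 3 4 pos_trans pos_sym)
  thus False using s by simp
qed

end

lemma lin_root:
  fixes a d s :: real
  assumes "a * (a + s * d) < 0" "0 < s"
  shows "\<exists>t. 0 < t \<and> t < s \<and> a + t * d = 0"
proof -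
  have a: "a \<noteq> 0" using assms(1) by auto
  show ?thesis
  proof (cases "a > 0")
    case True
    hence h: "a + s * d < 0" using assms(1) by (auto simp: mult_less_0_iff)
    hence "s * d < 0" using True by linarith
    hence dn: "d < 0" using assms(2) by (simp add: mult_less_0_iff)
    have "0 < -a/d" using True dn by (simp add: divide_pos_neg)
    moreover have "-a/d < s" unfolding neg_divide_less_eq[OF dn] using h by (simp add: algebra_simps)
    moreover have "a + (-a/d) * d = 0" using dn by simp
    ultimately show ?thesis by blast
  next
    case False
    hence an: "a < 0" using a by simp
    hence h: "a + s * d > 0" using assms(1) by (auto simp: mult_less_0_iff)
    hence "s * d > 0" using an by linarith
    hence dp: "d > 0" using assms(2) by (simp add: zero_less_mult_iff)
    have "0 < -a/d" using an dp by (simp add: divide_neg_pos)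
    moreover have "-a/d < s" unfolding pos_divide_less_eq[OF dp] using h by (simp add: algebra_simps)
    moreover have "a + (-a/d) * d = 0" using dp by simp
    ultimately show ?thesis by blast
  qed
qed

lemma root_sep:
  fixes a b t :: real
  assumes "a \<noteq> 0" "a + t * (b - a) = 0" "0 < t" "t < 1"
  shows "a * b < 0"
proof -
  have "t * (b - a) = -a" using assms(2) by linarith
  hence "b - a = -a / t" using assms(3) by (simp add: field_simps mult.commute)
  hence "b = a - a / t" by simp
  hence e: "a * b = a * a * (1 - 1 / t)" by (simp add: right_diff_distrib)
  have n: "1 - 1/t < 0" using assms(3,4) by (simp add: field_simps)
  have aa: "a * a > 0" using assms(1) by (auto simp: zero_less_mult_iff linorder_neq_iff)
  show ?thesis unfolding e using mult_pos_neg[OF aa n] .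
qed

lemma af_seg: "af \<beta> k (p + t *\<^sub>R (c - p)) = af \<beta> k p + t * (af \<beta> k c - af \<beta> k p)"
  by (simp add: af_def inner_add_left inner_diff_left algebra_simps)

lemma norm_seg:
  assumes "0 \<le> t" "t \<le> 1"
  shows "norm (p + t *\<^sub>R (c - p)) \<le> norm p + norm c"
proof -
  have "p + t *\<^sub>R (c - p) = (1 - t) *\<^sub>R p + t *\<^sub>R c" by (simp add: algebra_simps)
  hence "norm (p + t *\<^sub>R (c - p)) \<le> norm ((1 - t) *\<^sub>R p) + norm (t *\<^sub>R c)" by (metis norm_triangle_ineq)
  also have "\<dots> = (1 - t) * norm p + t * norm c" using assms by simp
  also have "\<dots> \<le> norm p + norm c"
  proof -
    have "(1 - t) * norm p \<le> norm p" using assms by (intro mult_left_le_one_le) auto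
    moreover have "t * norm c \<le> norm c" using assms by (intro mult_left_le_one_le) auto
    ultimately show ?thesis by linarith
  qed
  finally show ?thesis .
qed

context aw begin

lemma claimA:
  assumes c: "\<forall>\<beta>\<in>\<Phi>. \<forall>k. af \<beta> k c \<noteq> 0" and p0: "p0 \<in> A0" and sne: "sep p0 c \<noteq> {}"
  shows "\<exists>\<beta>0 k0. \<beta>0 \<in> \<Phi> \<and> is_wall \<Phi> \<xi> (hyp \<beta>0 k0) \<and> (\<beta>0, k0) \<in> sep p0 c"
proof -
  define B where "B = norm p0 + 1 + norm c"
  define K where "K = {(\<beta>, k::int). \<beta> \<in> \<Phi> \<and> \<bar>real_of_int k\<bar> \<le> B * norm \<beta>}"
  have fK: "finite K" unfolding K_def using fin by (rule finite_pairs)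
  define I where "I = {(x, y). x \<in> K \<and> y \<in> K \<and> fst y \<noteq> fst x \<and> fst y \<noteq> - fst x}"
  have fI: "finite I" by (rule finite_subset[of _ "K \<times> K"]) (auto simp: I_def fK)
  define n where "n = (\<lambda>(x::'a \<times> int, y::'a \<times> int).
     af (fst y) (snd y) c *\<^sub>R fst x - af (fst x) (snd x) c *\<^sub>R fst y)"
  define b where "b = (\<lambda>(x::'a \<times> int, y::'a \<times> int).
     af (fst y) (snd y) c * of_int (snd x) - af (fst x) (snd x) c * of_int (snd y))"
  have n0: "\<forall>i\<in>I. n i \<noteq> 0"
  proof
    fix i assume i: "i \<in> I"
    then obtain x y where xy: "i = (x, y)" "x \<in> K" "y \<in> K" "fst y \<noteq> fst x" "fst y \<noteq> - fst x"
      by (auto simp: I_def)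
    have bx: "fst x \<in> \<Phi>" and "fst y \<in> \<Phi>" using xy by (auto simp: K_def)
    have ax: "af (fst x) (snd x) c \<noteq> 0" using c bx by blast
    show "n i \<noteq> 0"
    proof
      assume "n i = 0"
      hence "af (fst y) (snd y) c *\<^sub>R fst x = af (fst x) (snd x) c *\<^sub>R fst y" by (simp add: n_def xy)
      hence "(1 / af (fst x) (snd x) c) *\<^sub>R (af (fst x) (snd x) c *\<^sub>R fst y) = (1 / af (fst x) (snd x) c) *\<^sub>R (af (fst y) (snd y) c *\<^sub>R fst x)" by simp
      hence "fst y = (af (fst y) (snd y) c / af (fst x) (snd x) c) *\<^sub>R fst x" using ax by simp
      hence "(af (fst y) (snd y) c / af (fst x) (snd x) c) *\<^sub>R fst x \<in> \<Phi>" using \<open>fst y \<in> \<Phi>\<close> by simp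
      hence "af (fst y) (snd y) c / af (fst x) (snd x) c = 1 \<or> af (fst y) (snd y) c / af (fst x) (snd x) c = -1"
        using reduced[OF bx] by blast
      thus False using xy(4,5) \<open>fst y = _\<close> by auto
    qed
  qed
  define U where "U = A0 \<inter> ball p0 1"
  have oU: "open U" unfolding U_def using A0_open by auto
  have neU: "U \<noteq> {}" using p0 by (auto simp: U_def)
  obtain p where pU: "p \<in> U" and pav: "\<forall>i\<in>I. inner p (n i) \<noteq> b i"
    using avoid_hyps[OF fI oU neU n0] by blast
  have pA: "p \<in> A0" and pd: "dist p0 p < 1" using pU by (auto simp: U_def)
  have np: "norm p \<le> norm p0 + 1" using norm_triangle_sub[of p p0] pd by (simp add: dist_norm norm_minus_commute)
  define seg where "seg = (\<lambda>t::real. p + t *\<^sub>R (c - p))"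
  have segK: "(\<beta>, k) \<in> K" if "\<beta> \<in> \<Phi>" "0 \<le> t" "t \<le> 1" "af \<beta> k (seg t) = 0" for \<beta> k t
  proof -
    have "of_int k = inner (seg t) \<beta>" using that(4) by (simp add: af_def)
    hence "\<bar>real_of_int k\<bar> \<le> norm (seg t) * norm \<beta>" using Cauchy_Schwarz_ineq2 by metis
    also have "\<dots> \<le> B * norm \<beta>"
      using norm_seg[OF that(2,3), of p c] np by (intro mult_right_mono) (auto simp: seg_def B_def)
    finally show ?thesis using that(1) by (simp add: K_def)
  qed
  define T where "T = {t. 0 \<le> t \<and> t \<le> 1 \<and> (\<exists>\<beta>\<in>\<Phi>. \<exists>k. af \<beta> k (seg t) = 0)}"
  have fT: "finite T"
  proof (rule finite_subset)
    show "T \<subseteq> (\<lambda>(\<beta>, k). af \<beta> k p / (af \<beta> k p - af \<beta> k c)) ` K"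
    proof
      fix t assume "t \<in> T"
      then obtain \<beta> k where bk: "\<beta> \<in> \<Phi>" "0 \<le> t" "t \<le> 1" "af \<beta> k (seg t) = 0" by (auto simp: T_def)
      have inK: "(\<beta>, k) \<in> K" using segK[OF bk] .
      have ap: "af \<beta> k p \<noteq> 0" using A0_off[OF pA bk(1)] .
      have e: "af \<beta> k p + t * (af \<beta> k c - af \<beta> k p) = 0" using bk(4) by (simp add: seg_def af_seg)
      hence "af \<beta> k p - af \<beta> k c \<noteq> 0" using ap by auto
      hence "t = af \<beta> k p / (af \<beta> k p - af \<beta> k c)" using e by (simp add: field_simps)
      thus "t \<in> (\<lambda>(\<beta>, k). af \<beta> k p / (af \<beta> k p - af \<beta> k c)) ` K" using inK by force
    qed
    show "finite ((\<lambda>(\<beta>, k). af \<beta> k p / (af \<beta> k p - af \<beta> k c)) ` K)" using fK by simp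
  qed
  obtain \<beta>1 k1 where s1: "(\<beta>1, k1) \<in> sep p0 c" using sne by auto
  have b1: "\<beta>1 \<in> \<Phi>" and s1': "af \<beta>1 k1 p0 * af \<beta>1 k1 c < 0" using s1 by (auto simp: sep_def)
  have s1p: "af \<beta>1 k1 p * af \<beta>1 k1 c < 0"
  proof -
    have "af \<beta>1 k1 p * af \<beta>1 k1 p0 > 0" using A0_same[OF pA p0 b1] .
    thus ?thesis using s1' by (auto simp: zero_less_mult_iff mult_less_0_iff)
  qed
  define t1 where "t1 = af \<beta>1 k1 p / (af \<beta>1 k1 p - af \<beta>1 k1 c)"
  have t1: "0 < t1" "t1 < 1" "af \<beta>1 k1 (seg t1) = 0"
  proof -
    define a where "a = af \<beta>1 k1 p"
    define d where "d = af \<beta>1 k1 c"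
    have ad: "a * d < 0" using s1p by (simp add: a_def d_def)
    have "(a > 0 \<and> d < 0) \<or> (a < 0 \<and> d > 0)" using ad by (auto simp: mult_less_0_iff)
    hence "0 < a / (a - d) \<and> a / (a - d) < 1 \<and> a + a / (a - d) * (d - a) = 0"
    proof
      assume h: "a > 0 \<and> d < 0"
      hence "a - d > 0" by linarith
      thus ?thesis using h by (simp add: field_simps)
    next
      assume h: "a < 0 \<and> d > 0"
      hence "a - d < 0" by linarith
      thus ?thesis using h by (simp add: field_simps)
    qed
    thus "0 < t1" "t1 < 1" "af \<beta>1 k1 (seg t1) = 0"
      by (simp_all add: t1_def seg_def af_seg a_def[symmetric] d_def[symmetric])
  qed
  have t1T: "t1 \<in> T" using t1 b1 by (auto simp: T_def)
  define ts where "ts = Min T"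
  have tsT: "ts \<in> T" unfolding ts_def using fT t1T by (intro Min_in) auto
  have tsmin: "\<And>t. t \<in> T \<Longrightarrow> ts \<le> t" using fT by (simp add: ts_def)
  have ts1: "ts < 1" using tsmin[OF t1T] t1(2) by simp
  have ts0: "0 < ts"
  proof -
    have "ts \<noteq> 0"
    proof
      assume "ts = 0"
      then obtain \<beta> k where "\<beta> \<in> \<Phi>" "af \<beta> k p = 0" using tsT by (auto simp: T_def seg_def)
      thus False using A0_off[OF pA] by blast
    qed
    thus ?thesis using tsT by (auto simp: T_def)
  qed
  define z where "z = seg ts"
  obtain \<beta>s ks where bs: "\<beta>s \<in> \<Phi>" "af \<beta>s ks z = 0" using tsT by (auto simp: T_def z_def)
  have before: "seg s \<in> A0" if s: "0 \<le> s" "s < ts" for s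
  proof (rule A0_char[OF pA], intro ballI allI)
    fix \<beta> k assume b: "\<beta> \<in> \<Phi>"
    have ap: "af \<beta> k p \<noteq> 0" using A0_off[OF pA b] .
    show "af \<beta> k p * af \<beta> k (seg s) > 0"
    proof (rule ccontr)
      assume "\<not> af \<beta> k p * af \<beta> k (seg s) > 0"
      hence "af \<beta> k (seg s) = 0 \<or> af \<beta> k p * af \<beta> k (seg s) < 0" using ap by (metis linorder_neqE_linordered_idom mult_eq_0_iff)
      thus False
      proof
        assume "af \<beta> k (seg s) = 0"
        hence "s \<in> T" using s ts1 b by (auto simp: T_def)
        thus False using tsmin s by force
      next
        assume neg: "af \<beta> k p * af \<beta> k (seg s) < 0"
        hence "s \<noteq> 0" by (auto simp: seg_def)
        hence s0: "0 < s" using s by simp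
        obtain t where t: "0 < t" "t < s" "af \<beta> k p + t * (af \<beta> k c - af \<beta> k p) = 0"
          using lin_root[OF _ s0, of "af \<beta> k p" "af \<beta> k c - af \<beta> k p"] neg by (auto simp: seg_def af_seg)
        hence "t \<in> T" using s ts1 b by (auto simp: T_def seg_def af_seg)
        thus False using tsmin t s by force
      qed
    qed
  qed
  have zcl: "z \<in> closure A0"
    unfolding closure_approachable
  proof (intro allI impI)
    fix e :: real assume e: "e > 0"
    define \<delta> where "\<delta> = min ts (e / (norm (c - p) + 1)) / 2"
    have np1: "norm (c - p) + 1 > 0" using norm_ge_zero[of "c - p"] by linarith
    have d0: "\<delta> > 0" using ts0 e np1 by (simp add: \<delta>_def)
    have dts: "\<delta> < ts" using ts0 by (simp add: \<delta>_def)
    have "seg (ts - \<delta>) \<in> A0" using before[of "ts - \<delta>"] d0 dts by simp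
    moreover have "dist (seg (ts - \<delta>)) z < e"
    proof -
      have "seg (ts - \<delta>) - z = (-\<delta>) *\<^sub>R (c - p)" by (simp add: seg_def z_def algebra_simps)
      hence "dist (seg (ts - \<delta>)) z = \<delta> * norm (c - p)"
        using d0 by (simp add: dist_norm)
      also have "\<dots> \<le> (e / (norm (c - p) + 1)) / 2 * norm (c - p)"
      proof (intro mult_right_mono)
        show "\<delta> \<le> (e / (norm (c - p) + 1)) / 2"
          unfolding \<delta>_def using min.cobounded2[of ts "e/(norm (c-p)+1)"] by (rule divide_right_mono) simp
      qed simp
      also have "\<dots> < e"
      proof -
        have pos: "0 < 2 + 2 * norm (c - p)" using norm_ge_zero[of "c - p"] by linarith
        have "e * norm (c - p) < e * (2 + 2 * norm (c - p))"
          using e norm_ge_zero[of "c - p"] by (intro mult_strict_left_mono) linarith+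
        hence "e * norm (c - p) / (2 + 2 * norm (c - p)) < e" by (simp add: pos_divide_less_eq[OF pos])
        thus ?thesis by (simp add: field_simps)
      qed
      finally show ?thesis .
    qed
    ultimately show "\<exists>y\<in>A0. dist y z < e" by blast
  qed
  have sepc: "af \<beta>s ks p * af \<beta>s ks c < 0"
    using root_sep[OF A0_off[OF pA bs(1)] _ ts0 ts1] bs(2) by (simp add: z_def seg_def af_seg)
  have sep0: "(\<beta>s, ks) \<in> sep p0 c"
  proof -
    have "af \<beta>s ks p * af \<beta>s ks p0 > 0" using A0_same[OF pA p0 bs(1)] .
    thus ?thesis using sepc bs(1) by (auto simp: sep_def zero_less_mult_iff mult_less_0_iff)
  qed
  have zK: "(\<beta>, k) \<in> K" if "\<beta> \<in> \<Phi>" "af \<beta> k z = 0" for \<beta> k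
    using segK[of \<beta> ts k] that ts0 ts1 by (simp add: z_def)
  have only: "hyp \<beta> k = hyp \<beta>s ks" if b: "\<beta> \<in> \<Phi>" and a: "af \<beta> k z = 0" for \<beta> k
  proof -
    have "(\<beta> = \<beta>s \<and> k = ks) \<or> (\<beta> = -\<beta>s \<and> k = -ks)"
    proof (cases "\<beta> = \<beta>s \<or> \<beta> = -\<beta>s")
      case True
      thus ?thesis
      proof
        assume "\<beta> = \<beta>s"
        thus ?thesis using a bs(2) by (simp add: af_def)
      next
        assume "\<beta> = -\<beta>s"
        thus ?thesis using a bs(2) by (simp add: af_def)
      qed
    next
      case False
      define x where "x = (\<beta>s, ks)"
      define y where "y = (\<beta>, k)"
      have iI: "(x, y) \<in> I" using False zK[OF bs] zK[OF b a] by (auto simp: I_def x_def y_def)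
      define g where "g = (\<lambda>v. af \<beta> k c * af \<beta>s ks v - af \<beta>s ks c * af \<beta> k v)"
      have gn: "g v = inner v (n (x, y)) - b (x, y)" for v
        by (simp add: g_def n_def b_def x_def y_def af_def inner_diff_right algebra_simps)
      have "g z = (1 - ts) * g p"
        unfolding g_def z_def seg_def af_seg by (simp add: algebra_simps)
      moreover have "g z = 0" using a bs(2) by (simp add: g_def)
      ultimately have "g p = 0" using ts1 by simp
      hence "inner p (n (x, y)) = b (x, y)" using gn by simp
      thus ?thesis using pav iI by blast
    qed
    thus ?thesis using hyp_eq_iff[OF bs(1) b] by auto
  qed
  have "is_wall \<Phi> \<xi> (hyp \<beta>s ks)"
    unfolding is_wall_def
  proof (intro conjI bexI ballI impI)
    show "hyp \<beta>s ks \<in> hyperplanes \<Phi>" using bs(1) by (auto simp: hyperplanes_def)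
    show "z \<in> closure A0 \<inter> hyp \<beta>s ks" using zcl bs(2) by (simp add: hyp_af)
    fix H' assume "H' \<in> hyperplanes \<Phi>" "z \<in> H'"
    then obtain \<beta> k where "H' = hyp \<beta> k" "\<beta> \<in> \<Phi>" "af \<beta> k z = 0" by (auto simp: hyperplanes_def hyp_af)
    thus "H' = hyp \<beta>s ks" using only by blast
  qed
  thus ?thesis using bs(1) sep0 by blast
qed

end

lemma neg_trans: "(x::real) * y > 0 \<Longrightarrow> x * z < 0 \<Longrightarrow> y * z < 0"
  by (auto simp: zero_less_mult_iff mult_less_0_iff)

context aw begin

lemma S_wall: "s \<in> S \<Longrightarrow> \<exists>\<beta>0 k0. s = srefl \<beta>0 k0 \<and> \<beta>0 \<in> \<Phi> \<and> is_wall \<Phi> \<xi> (hyp \<beta>0 k0)"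
  by (auto simp: simple_refls_def)

lemma wall_S: "\<beta>0 \<in> \<Phi> \<Longrightarrow> is_wall \<Phi> \<xi> (hyp \<beta>0 k0) \<Longrightarrow> srefl \<beta>0 k0 \<in> S"
  by (auto simp: simple_refls_def)

lemma wordS_W: "set ws \<subseteq> S \<Longrightarrow> foldr (\<circ>) ws id \<in> W"
  using word_W S_sub by blast

lemma W_off:
  assumes w: "w \<in> W" and p: "p \<in> A0" and b: "\<beta> \<in> \<Phi>"
  shows "af \<beta> k (w p) \<noteq> 0"
proof -
  obtain \<beta>' k' where "\<beta>' \<in> \<Phi>" "\<forall>v. af \<beta> k (w v) = af \<beta>' k' v" using W_pull[OF w] b by blast
  thus ?thesis using A0_off[OF p] by simp
qed

lemma trans_alc:
  assumes p0: "p0 \<in> A0"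
  shows "(\<forall>\<beta>\<in>\<Phi>. \<forall>k. af \<beta> k c \<noteq> 0) \<Longrightarrow> \<exists>u. set u \<subseteq> S \<and> foldr (\<circ>) u id c \<in> A0"
proof (induction "card (sep p0 c)" arbitrary: c rule: less_induct)
  case less
  show ?case
  proof (cases "sep p0 c = {}")
    case True
    have "c \<in> A0"
    proof (rule A0_char[OF p0], intro ballI allI)
      fix \<beta> k assume b: "\<beta> \<in> \<Phi>"
      have "\<not> af \<beta> k p0 * af \<beta> k c < 0" using True b by (auto simp: sep_def)
      moreover have "af \<beta> k p0 \<noteq> 0" "af \<beta> k c \<noteq> 0" using A0_off[OF p0 b] less.prems b by auto
      ultimately show "af \<beta> k p0 * af \<beta> k c > 0"
        by (metis linorder_neqE_linordered_idom mult_eq_0_iff)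
    qed
    thus ?thesis by (intro exI[of _ "[]"]) simp
  next
    case False
    obtain \<beta>0 k0 where w: "\<beta>0 \<in> \<Phi>" "is_wall \<Phi> \<xi> (hyp \<beta>0 k0)" "(\<beta>0, k0) \<in> sep p0 c"
      using claimA[OF less.prems p0 False] by blast
    define s where "s = srefl \<beta>0 k0"
    have sS: "s \<in> S" using wall_S[OF w(1,2)] by (simp add: s_def)
    have ss: "s (s v) = v" for v using srefl_invol[OF nz[OF w(1)]] by (simp add: s_def)
    have x0: "af \<beta>0 k0 p0 * af \<beta>0 k0 c < 0" using w(3) by (simp add: sep_def)
    define \<pi> where "\<pi> = (\<lambda>x::'a \<times> int. SOME y. fst y \<in> \<Phi> \<and> (\<forall>v. af (fst x) (snd x) (s v) = af (fst y) (snd y) v))"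
    have \<pi>: "fst (\<pi> x) \<in> \<Phi> \<and> (\<forall>v. af (fst x) (snd x) (s v) = af (fst (\<pi> x)) (snd (\<pi> x)) v)" if fx: "fst x \<in> \<Phi>" for x
    proof -
      obtain \<beta>' k' where "\<beta>' \<in> \<Phi>" "\<forall>v. af (fst x) (snd x) (s v) = af \<beta>' k' v"
        using af_srefl_root[OF w(1) fx] s_def by blast
      hence "\<exists>y. fst y \<in> \<Phi> \<and> (\<forall>v. af (fst x) (snd x) (s v) = af (fst y) (snd y) v)"
        by (intro exI[of _ "(\<beta>', k')"]) simp
      thus ?thesis unfolding \<pi>_def by (rule someI_ex)
    qed
    have sflip: "af \<beta> k (s v) = - af \<beta> k v" if "(\<beta> = \<beta>0 \<and> k = k0) \<or> (\<beta> = -\<beta>0 \<and> k = -k0)" for \<beta> k v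
      using that af_srefl_self[OF nz[OF w(1)]] by (auto simp: s_def af_neg)
    have notH: "False" if "(\<beta>, k) \<in> sep p0 (s c)" "(\<beta> = \<beta>0 \<and> k = k0) \<or> (\<beta> = -\<beta>0 \<and> k = -k0)" for \<beta> k
    proof -
      have "af \<beta> k p0 * af \<beta> k c < 0" using that(2) x0 by (auto simp: af_neg)
      moreover have "af \<beta> k p0 * af \<beta> k (s c) < 0" using that(1) by (simp add: sep_def)
      ultimately show False using sflip[OF that(2)] by simp
    qed
    have inj: "inj_on \<pi> (sep p0 (s c))"
    proof (rule inj_onI)
      fix x y assume x: "x \<in> sep p0 (s c)" and y: "y \<in> sep p0 (s c)" and e: "\<pi> x = \<pi> y"
      have fx: "fst x \<in> \<Phi>" and fy: "fst y \<in> \<Phi>" using x y by (auto simp: sep_def)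
      have 1: "af (fst x) (snd x) (s v) = af (fst y) (snd y) (s v)" for v
        using \<pi>[OF fx] \<pi>[OF fy] e by simp
      have "\<forall>v. af (fst x) (snd x) v = af (fst y) (snd y) v"
      proof
        fix v show "af (fst x) (snd x) v = af (fst y) (snd y) v" using 1[of "s v"] by (simp add: ss)
      qed
      hence "fst x = fst y \<and> snd x = snd y" by (rule af_unique)
      thus "x = y" by (simp add: prod_eq_iff)
    qed
    have sub: "\<pi> ` sep p0 (s c) \<subseteq> sep p0 c - {(\<beta>0, k0)}"
    proof
      fix yy assume "yy \<in> \<pi> ` sep p0 (s c)"
      then obtain \<beta> k where x: "(\<beta>, k) \<in> sep p0 (s c)" and yy: "yy = \<pi> (\<beta>, k)" by auto
      have b: "\<beta> \<in> \<Phi>" and xs: "af \<beta> k p0 * af \<beta> k (s c) < 0" using x by (auto simp: sep_def)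
      obtain \<beta>' k' where y: "\<pi> (\<beta>, k) = (\<beta>', k')" by fastforce
      have yp: "\<beta>' \<in> \<Phi>" "\<forall>v. af \<beta> k (s v) = af \<beta>' k' v" using \<pi>[of "(\<beta>, k)"] b y by auto
      have nH: "\<not> ((\<beta> = \<beta>0 \<and> k = k0) \<or> (\<beta> = -\<beta>0 \<and> k = -k0))" using notH[OF x] by blast
      have "af \<beta> k p0 * af \<beta> k (s p0) > 0"
      proof -
        have "af \<beta> k (s p0) \<noteq> 0" using yp(2) A0_off[OF p0 yp(1)] by simp
        moreover have "af \<beta> k p0 \<noteq> 0" using A0_off[OF p0 b] .
        moreover have "\<not> af \<beta> k p0 * af \<beta> k (s p0) < 0"
          using simple_sep[OF w(1,2) p0 b] nH by (auto simp: s_def)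
        ultimately show ?thesis by (metis linorder_neqE_linordered_idom mult_eq_0_iff)
      qed
      hence "af \<beta> k (s p0) * af \<beta> k (s c) < 0" using xs by (rule neg_trans)
      hence "af \<beta>' k' p0 * af \<beta>' k' c < 0" using yp(2) by simp
      hence m: "(\<beta>', k') \<in> sep p0 c" using yp(1) by (simp add: sep_def)
      have "(\<beta>', k') \<noteq> (\<beta>0, k0)"
      proof
        assume "(\<beta>', k') = (\<beta>0, k0)"
        hence e: "af \<beta> k (s v) = af \<beta>0 k0 v" for v using yp(2) by simp
        have "\<forall>v. af \<beta> k v = af (-\<beta>0) (-k0) v"
        proof
          fix v
          have "af \<beta> k v = af \<beta>0 k0 (s v)" using e[of "s v"] by (simp add: ss)
          also have "\<dots> = af (-\<beta>0) (-k0) v" using sflip[of \<beta>0 k0 v] by (simp add: af_neg)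
          finally show "af \<beta> k v = af (-\<beta>0) (-k0) v" .
        qed
        hence "\<beta> = -\<beta>0 \<and> k = -k0" using af_unique by blast
        thus False using nH by blast
      qed
      thus "yy \<in> sep p0 c - {(\<beta>0, k0)}" using m y yy by simp
    qed
    have "card (sep p0 (s c)) = card (\<pi> ` sep p0 (s c))" using inj by (simp add: card_image)
    also have "\<dots> \<le> card (sep p0 c - {(\<beta>0, k0)})" using sub sep_finite by (intro card_mono) auto
    also have "\<dots> < card (sep p0 c)" using w(3) sep_finite by (intro card_Diff1_less) auto
    finally have lt: "card (sep p0 (s c)) < card (sep p0 c)" .
    have off: "\<forall>\<beta>\<in>\<Phi>. \<forall>k. af \<beta> k (s c) \<noteq> 0"
    proof (intro ballI allI)
      fix \<beta> k assume b: "\<beta> \<in> \<Phi>"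
      obtain \<beta>' k' where "\<beta>' \<in> \<Phi>" "\<forall>v. af \<beta> k (s v) = af \<beta>' k' v"
        using af_srefl_root[OF w(1) b] s_def by blast
      thus "af \<beta> k (s c) \<noteq> 0" using less.prems by simp
    qed
    obtain u where u: "set u \<subseteq> S" "foldr (\<circ>) u id (s c) \<in> A0" using less.hyps[OF lt off] by blast
    have "foldr (\<circ>) (u @ [s]) id c = foldr (\<circ>) u id (s c)" by (simp add: foldr_comp[of u s])
    thus ?thesis using u sS by (intro exI[of _ "u @ [s]"]) auto
  qed
qed

end

lemma foldr_app: "foldr (\<circ>) (xs @ ys) id = foldr (\<circ>) xs id \<circ> foldr (\<circ>) ys id"
  by (simp add: foldr_comp[of xs "foldr (\<circ>) ys id"])

context aw begin

lemma generic_point: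
  assumes b: "\<beta> \<in> \<Phi>"
  shows "\<exists>z. af \<beta> k z = 0 \<and> (\<forall>\<beta>'\<in>\<Phi>. \<forall>k'. af \<beta>' k' z = 0 \<longrightarrow> (\<beta>' = \<beta> \<and> k' = k) \<or> (\<beta>' = -\<beta> \<and> k' = -k))"
proof -
  define B where "B = inner \<beta> \<beta>"
  have B0: "B > 0" using nz[OF b] by (simp add: B_def)
  define y0 where "y0 = (of_int k / B) *\<^sub>R \<beta>"
  have y0h: "af \<beta> k y0 = 0" using B0 by (simp add: y0_def af_def B_def)
  define Bd where "Bd = norm y0 + 2"
  define K where "K = {(\<beta>', k'::int). \<beta>' \<in> \<Phi> \<and> \<bar>real_of_int k'\<bar> \<le> Bd * norm \<beta>'}"
  have fK: "finite K" unfolding K_def using fin by (rule finite_pairs)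
  define I where "I = {y \<in> K. fst y \<noteq> \<beta> \<and> fst y \<noteq> -\<beta>}"
  have fI: "finite I" using fK by (simp add: I_def)
  define n where "n = (\<lambda>y::'a \<times> int. fst y - (inner \<beta> (fst y) / B) *\<^sub>R \<beta>)"
  define bb where "bb = (\<lambda>y::'a \<times> int. of_int (snd y) - of_int k * inner \<beta> (fst y) / B)"
  have n0: "\<forall>y\<in>I. n y \<noteq> 0"
  proof
    fix y assume y: "y \<in> I"
    hence fy: "fst y \<in> \<Phi>" "fst y \<noteq> \<beta>" "fst y \<noteq> -\<beta>" by (auto simp: I_def K_def)
    show "n y \<noteq> 0"
    proof
      assume "n y = 0"
      hence e: "fst y = (inner \<beta> (fst y) / B) *\<^sub>R \<beta>" by (simp add: n_def)
      hence "(inner \<beta> (fst y) / B) *\<^sub>R \<beta> \<in> \<Phi>" using fy(1) by simp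
      hence "inner \<beta> (fst y) / B = 1 \<or> inner \<beta> (fst y) / B = -1" using reduced[OF b] by blast
      thus False using e fy by auto
    qed
  qed
  have oU: "open (ball y0 1)" by simp
  have neU: "ball y0 1 \<noteq> {}" by simp
  obtain u where u: "u \<in> ball y0 1" and uav: "\<forall>y\<in>I. inner u (n y) \<noteq> bb y"
    using avoid_hyps[OF fI oU neU n0] by blast
  define z where "z = u - (af \<beta> k u / B) *\<^sub>R \<beta>"
  have zh: "af \<beta> k z = 0" using B0 by (simp add: z_def af_def B_def inner_diff_left field_simps)
  have zaf: "af (fst y) (snd y) z = inner u (n y) - bb y" for y
    using B0 by (simp add: z_def n_def bb_def af_def inner_diff_left inner_diff_right inner_commute field_simps)
  have zn: "norm z \<le> Bd"
  proof -
    have l: "\<bar>af \<beta> k u\<bar> \<le> dist u y0 * norm \<beta>" using af_lip[of \<beta> k u y0] y0h by simp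
    have nb: "norm \<beta> * norm \<beta> = B" by (simp add: B_def power2_norm_eq_inner[symmetric] power2_eq_square)
    have nbp: "norm \<beta> > 0" using nz[OF b] by simp
    have "norm ((af \<beta> k u / B) *\<^sub>R \<beta>) = \<bar>af \<beta> k u\<bar> / B * norm \<beta>" using B0 by simp
    also have "\<dots> \<le> dist u y0 * norm \<beta> / B * norm \<beta>"
      using l B0 by (intro mult_right_mono divide_right_mono) auto
    also have "\<dots> = dist u y0" unfolding nb[symmetric] using nbp by (simp add: field_simps)
    finally have 1: "norm ((af \<beta> k u / B) *\<^sub>R \<beta>) \<le> dist u y0" .
    have du: "dist u y0 < 1" using u by (simp add: dist_commute)
    have "norm z \<le> norm u + norm ((af \<beta> k u / B) *\<^sub>R \<beta>)" unfolding z_def by (rule norm_triangle_ineq4)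
    moreover have "norm u \<le> norm y0 + dist u y0" using norm_triangle_sub[of u y0] by (simp add: dist_norm)
    ultimately show ?thesis using 1 du by (simp add: Bd_def)
  qed
  have "\<forall>\<beta>'\<in>\<Phi>. \<forall>k'. af \<beta>' k' z = 0 \<longrightarrow> (\<beta>' = \<beta> \<and> k' = k) \<or> (\<beta>' = -\<beta> \<and> k' = -k)"
  proof (intro ballI allI impI)
    fix \<beta>' k' assume b': "\<beta>' \<in> \<Phi>" and a: "af \<beta>' k' z = 0"
    show "(\<beta>' = \<beta> \<and> k' = k) \<or> (\<beta>' = -\<beta> \<and> k' = -k)"
    proof (cases "\<beta>' = \<beta> \<or> \<beta>' = -\<beta>")
      case True
      thus ?thesis
      proof
        assume "\<beta>' = \<beta>" thus ?thesis using a zh by (simp add: af_def)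
      next
        assume "\<beta>' = -\<beta>" thus ?thesis using a zh by (simp add: af_def)
      qed
    next
      case False
      have "of_int k' = inner z \<beta>'" using a by (simp add: af_def)
      hence "\<bar>real_of_int k'\<bar> \<le> norm z * norm \<beta>'" using Cauchy_Schwarz_ineq2 by metis
      also have "\<dots> \<le> Bd * norm \<beta>'" using zn by (intro mult_right_mono) auto
      finally have "(\<beta>', k') \<in> I" using b' False by (simp add: I_def K_def)
      hence "inner u (n (\<beta>', k')) \<noteq> bb (\<beta>', k')" using uav by blast
      thus ?thesis using zaf[of "(\<beta>', k')"] a by simp
    qed
  qed
  thus ?thesis using zh by blast
qed

lemma refl_word:
  assumes b: "\<beta> \<in> \<Phi>"
  shows "\<exists>ws. set ws \<subseteq> S \<and> foldr (\<circ>) ws id = srefl \<beta> k"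
proof -
  obtain p0 where p0: "p0 \<in> A0" using A0_ne by blast
  define B where "B = inner \<beta> \<beta>"
  have B0: "B > 0" using nz[OF b] by (simp add: B_def)
  have nbp: "norm \<beta> > 0" using nz[OF b] by simp
  obtain z where zh: "af \<beta> k z = 0" and only: "\<forall>\<beta>'\<in>\<Phi>. \<forall>k'. af \<beta>' k' z = 0 \<longrightarrow> (\<beta>' = \<beta> \<and> k' = k) \<or> (\<beta>' = -\<beta> \<and> k' = -k)"
    using generic_point[OF b] by blast
  obtain e where e: "e > 0" "\<forall>\<beta>\<in>\<Phi>. \<forall>k v. af \<beta> k z \<noteq> 0 \<longrightarrow> dist v z < e \<longrightarrow> af \<beta> k v * af \<beta> k z > 0"
    using loc_fin2 by blast
  define \<delta> where "\<delta> = e / (2 * norm \<beta>)"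
  have d0: "\<delta> > 0" using e nbp by (simp add: \<delta>_def)
  define qv where "qv = (\<lambda>t::real. z + t *\<^sub>R \<beta>)"
  have afq: "af \<beta> k (qv t) = t * B" for t using zh by (simp add: qv_def af_def inner_add_left B_def)
  have dq: "dist (qv t) z = \<bar>t\<bar> * norm \<beta>" for t by (simp add: qv_def dist_norm)
  have same: "af \<beta>' k' (qv t) * af \<beta>' k' (qv \<delta>) > 0" if t: "0 < t" "t \<le> \<delta>" and b': "\<beta>' \<in> \<Phi>" for t \<beta>' k'
  proof (cases "af \<beta>' k' z = 0")
    case True
    hence "(\<beta>' = \<beta> \<and> k' = k) \<or> (\<beta>' = -\<beta> \<and> k' = -k)" using only b' by blast
    thus ?thesis
    proof
      assume "\<beta>' = \<beta> \<and> k' = k"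
      thus ?thesis using afq t d0 B0 by (simp add: mult_pos_pos)
    next
      assume "\<beta>' = -\<beta> \<and> k' = -k"
      hence "af \<beta>' k' (qv t) = - (t * B)" "af \<beta>' k' (qv \<delta>) = - (\<delta> * B)" using afq by (auto simp: af_neg)
      thus ?thesis using t d0 B0 by (simp add: mult_pos_pos)
    qed
  next
    case False
    have dd: "dist (qv s) z < e" if "0 < s" "s \<le> \<delta>" for s
    proof -
      have "dist (qv s) z = s * norm \<beta>" using dq[of s] that by simp
      also have "\<dots> \<le> \<delta> * norm \<beta>" using that nbp by (intro mult_right_mono) auto
      finally have "dist (qv s) z \<le> \<delta> * norm \<beta>" .
      also have "\<dots> = e / 2" using nbp by (simp add: \<delta>_def)
      finally show ?thesis using e by simp
    qed
    have "dist (qv t) z < e" "dist (qv \<delta>) z < e" using dd t d0 by auto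
    note ee = e(2)[rule_format, OF b' False]
    have "af \<beta>' k' (qv t) * af \<beta>' k' z > 0" using ee[OF \<open>dist (qv t) z < e\<close>] .
    moreover have "af \<beta>' k' (qv \<delta>) * af \<beta>' k' z > 0" using ee[OF \<open>dist (qv \<delta>) z < e\<close>] .
    ultimately have "af \<beta>' k' (qv t) * af \<beta>' k' z > 0" "af \<beta>' k' (qv \<delta>) * af \<beta>' k' z > 0" by blast+
    thus ?thesis by (meson pos_trans pos_sym)
  qed
  define c where "c = qv \<delta>"
  have coff: "\<forall>\<beta>'\<in>\<Phi>. \<forall>k'. af \<beta>' k' c \<noteq> 0"
  proof (intro ballI allI)
    fix \<beta>' k' assume "\<beta>' \<in> \<Phi>"
    hence "af \<beta>' k' c * af \<beta>' k' c > 0" using same[of \<delta> \<beta>' k'] d0 by (simp add: c_def)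
    thus "af \<beta>' k' c \<noteq> 0" by auto
  qed
  obtain u where u: "set u \<subseteq> S" "foldr (\<circ>) u id c \<in> A0" using trans_alc[OF p0 coff] by blast
  define U where "U = foldr (\<circ>) u id"
  define V where "V = foldr (\<circ>) (rev u) id"
  have uR: "set u \<subseteq> affine_reflections \<Phi>" using u(1) S_sub by blast
  have UV: "U \<circ> V = id" "V \<circ> U = id" using word_inv[OF uR] by (auto simp: U_def V_def)
  have UVp: "U (V v) = v" "V (U v) = v" for v using UV by (auto simp: fun_eq_iff)
  have UW: "U \<in> W" using word_W[OF uR] by (simp add: U_def)
  have VW: "V \<in> W" using word_W[of "rev u"] uR by (simp add: V_def)
  obtain \<beta>1 k1 where b1: "\<beta>1 \<in> \<Phi>" "\<forall>v. af \<beta> k (V v) = af \<beta>1 k1 v" using W_pull[OF VW] b by blast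
  have conj: "srefl \<beta> k \<circ> V = V \<circ> srefl \<beta>1 k1" using W_conj[OF VW] b b1(2) by blast
  have rfact: "srefl \<beta> k = V \<circ> srefl \<beta>1 k1 \<circ> U"
  proof -
    have "srefl \<beta> k = srefl \<beta> k \<circ> (V \<circ> U)" using UV by simp
    also have "\<dots> = V \<circ> srefl \<beta>1 k1 \<circ> U" using conj by (simp add: o_assoc)
    finally show ?thesis .
  qed
  have Uc: "U c \<in> A0" using u(2) by (simp add: U_def)
  have wall: "is_wall \<Phi> \<xi> (hyp \<beta>1 k1)"
    unfolding is_wall_def
  proof (intro conjI bexI ballI impI)
    show "hyp \<beta>1 k1 \<in> hyperplanes \<Phi>" using b1(1) by (auto simp: hyperplanes_def)
    have "af \<beta>1 k1 (U z) = 0" using b1(2)[rule_format, of "U z"] UVp zh by simp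
    moreover have "U z \<in> closure A0"
      unfolding closure_approachable
    proof (intro allI impI)
      fix e' :: real assume e': "e' > 0"
      define t where "t = min \<delta> (e' / (2 * norm \<beta>))"
      have t0: "t > 0" using d0 e' nbp by (simp add: t_def)
      have td: "t \<le> \<delta>" by (simp add: t_def)
      have "U (qv t) \<in> A0"
      proof (rule A0_char[OF Uc], intro ballI allI)
        fix \<beta>' k' assume b': "\<beta>' \<in> \<Phi>"
        obtain \<beta>'' k'' where b'': "\<beta>'' \<in> \<Phi>" "\<forall>v. af \<beta>' k' (U v) = af \<beta>'' k'' v"
          using W_pull[OF UW] b' by blast
        have "af \<beta>'' k'' (qv t) * af \<beta>'' k'' c > 0" using same[OF t0 td b''(1)] by (simp add: c_def)
        thus "af \<beta>' k' (U c) * af \<beta>' k' (U (qv t)) > 0" using b''(2) by (simp add: mult.commute)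
      qed
      moreover have "dist (U (qv t)) (U z) < e'"
      proof -
        have "dist (U (qv t)) (U z) = t * norm \<beta>" using W_dist[OF UW] dq[of t] t0 by simp
        also have "\<dots> \<le> e' / (2 * norm \<beta>) * norm \<beta>" using nbp by (intro mult_right_mono) (auto simp: t_def)
        also have "\<dots> = e' / 2" using nbp by simp
        finally show ?thesis using e' by simp
      qed
      ultimately show "\<exists>y\<in>A0. dist y (U z) < e'" by blast
    qed
    ultimately show "U z \<in> closure A0 \<inter> hyp \<beta>1 k1" by (simp add: hyp_af)
    fix H' assume H': "H' \<in> hyperplanes \<Phi>" "U z \<in> H'"
    then obtain \<beta>2 k2 where h2: "H' = hyp \<beta>2 k2" "\<beta>2 \<in> \<Phi>" "af \<beta>2 k2 (U z) = 0"
      by (auto simp: hyperplanes_def hyp_af)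
    obtain \<beta>3 k3 where b3: "\<beta>3 \<in> \<Phi>" "\<forall>v. af \<beta>2 k2 (U v) = af \<beta>3 k3 v"
      using W_pull[OF UW] h2(2) by blast
    have "af \<beta>3 k3 z = 0" using b3(2) h2(3) by simp
    hence 3: "(\<beta>3 = \<beta> \<and> k3 = k) \<or> (\<beta>3 = -\<beta> \<and> k3 = -k)" using only b3(1) by blast
    have e2: "af \<beta>2 k2 v = af \<beta>3 k3 (V v)" for v using b3(2)[rule_format, of "V v"] UVp by simp
    have "(\<beta>2 = \<beta>1 \<and> k2 = k1) \<or> (\<beta>2 = -\<beta>1 \<and> k2 = -k1)"
      using 3
    proof
      assume h: "\<beta>3 = \<beta> \<and> k3 = k"
      have "\<forall>v. af \<beta>2 k2 v = af \<beta>1 k1 v" using e2 h b1(2) by simp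
      thus ?thesis using af_unique by blast
    next
      assume h: "\<beta>3 = -\<beta> \<and> k3 = -k"
      have "\<forall>v. af \<beta>2 k2 v = af (-\<beta>1) (-k1) v" using e2 h b1(2) by (simp add: af_neg)
      thus ?thesis using af_unique by blast
    qed
    thus "H' = hyp \<beta>1 k1" using h2(1) hyp_eq_iff[OF b1(1) h2(2)] by auto
  qed
  have s1: "srefl \<beta>1 k1 \<in> S" using wall_S[OF b1(1) wall] .
  have e0: "foldr (\<circ>) (rev u @ srefl \<beta>1 k1 # u) id = V \<circ> srefl \<beta>1 k1 \<circ> U"
    by (simp add: V_def U_def foldr_comp[of "rev u" "srefl \<beta>1 k1 \<circ> foldr (\<circ>) u id"] o_assoc)
  have e: "foldr (\<circ>) (rev u @ srefl \<beta>1 k1 # u) id = srefl \<beta> k" by (simp only: e0 rfact)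
  moreover have "set (rev u @ srefl \<beta>1 k1 # u) \<subseteq> S" using u(1) s1 by auto
  ultimately show ?thesis by blast
qed

lemma gen: "w \<in> W \<Longrightarrow> \<exists>ws. set ws \<subseteq> S \<and> foldr (\<circ>) ws id = w"
proof (induction rule: affine_weyl.induct)
  case id_in thus ?case by (intro exI[of _ "[]"]) simp
next
  case (step r w)
  obtain \<beta> k where r: "r = srefl \<beta> k" "\<beta> \<in> \<Phi>" using step.hyps(1) by (auto simp: affine_reflections_def)
  obtain ws1 where 1: "set ws1 \<subseteq> S" "foldr (\<circ>) ws1 id = r" using refl_word[OF r(2)] r(1) by blast
  obtain ws2 where 2: "set ws2 \<subseteq> S" "foldr (\<circ>) ws2 id = w" using step.IH by blast
  have "foldr (\<circ>) (ws1 @ ws2) id = r \<circ> w" by (simp only: foldr_app 1(2) 2(2))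
  moreover have "set (ws1 @ ws2) \<subseteq> S" using 1 2 by simp
  ultimately show ?case by blast
qed

end

lemma disc_ivt:
  fixes f :: "nat \<Rightarrow> real"
  shows "(\<forall>i\<le>m. f i \<noteq> 0) \<Longrightarrow> f 0 * f m < 0 \<Longrightarrow> \<exists>j<m. f j * f (Suc j) < 0"
proof (induction m)
  case 0 thus ?case by (simp add: mult_less_0_iff)
next
  case (Suc m)
  show ?case
  proof (cases "f 0 * f m < 0")
    case True
    moreover have "\<forall>i\<le>m. f i \<noteq> 0" using Suc.prems(1) by simp
    ultimately obtain j where "j < m" "f j * f (Suc j) < 0" using Suc.IH by blast
    thus ?thesis by (intro exI[of _ j]) simp
  next
    case False
    have "f 0 \<noteq> 0" "f m \<noteq> 0" using Suc.prems(1) by auto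
    hence "f 0 * f m > 0" using False by (metis linorder_neqE_linordered_idom mult_eq_0_iff)
    hence "f m * f (Suc m) < 0" using Suc.prems(2) by (rule neg_trans)
    thus ?thesis by blast
  qed
qed

context aw begin

lemma len_word: "w \<in> W \<Longrightarrow> \<exists>ws. length ws = len w \<and> set ws \<subseteq> S \<and> foldr (\<circ>) ws id = w"
  unfolding coxeter_length_def
  by (rule LeastI_ex) (use gen in blast)

lemma len_le: "set ws \<subseteq> S \<Longrightarrow> len (foldr (\<circ>) ws id) \<le> length ws"
  unfolding coxeter_length_def by (rule Least_le) blast

lemma C_sep:
  assumes w: "w \<in> W" and b: "\<beta> \<in> \<Phi>" and p0: "p0 \<in> A0"
    and s: "af \<beta> k p0 * af \<beta> k (w p0) < 0"
  shows "len (srefl \<beta> k \<circ> w) < len w"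
proof -
  obtain ws where ws: "length ws = len w" "set ws \<subseteq> S" "foldr (\<circ>) ws id = w"
    using len_word[OF w] by blast
  define m where "m = length ws"
  define q where "q = (\<lambda>i. foldr (\<circ>) (take i ws) id p0)"
  have nzq: "\<forall>i\<le>m. af \<beta> k (q i) \<noteq> 0"
  proof (intro allI impI)
    fix i
    have "set (take i ws) \<subseteq> S" using ws(2) set_take_subset by (rule order_trans[rotated])
    hence "af \<beta> k (foldr (\<circ>) (take i ws) id p0) \<noteq> 0" by (rule W_off[OF wordS_W _ b, OF _ p0])
    thus "af \<beta> k (q i) \<noteq> 0" unfolding q_def .
  qed
  have "q 0 = p0" by (simp add: q_def)
  moreover have "q m = w p0" using ws(3) by (simp add: q_def m_def)
  ultimately have q0m: "af \<beta> k (q 0) * af \<beta> k (q m) < 0" using s by simp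
  have "\<exists>j<m. af \<beta> k (q j) * af \<beta> k (q (Suc j)) < 0"
    by (rule disc_ivt[of m "\<lambda>i. af \<beta> k (q i)", OF nzq q0m])
  then obtain j where j: "j < m" "af \<beta> k (q j) * af \<beta> k (q (Suc j)) < 0" by blast
  define wj where "wj = foldr (\<circ>) (take j ws) id"
  define sj where "sj = ws ! j"
  define R where "R = foldr (\<circ>) (drop (Suc j) ws) id"
  have sjS: "sj \<in> S" using ws(2) j(1) by (simp add: sj_def m_def subset_iff)
  have tj: "take (Suc j) ws = take j ws @ [sj]" using j(1) by (simp add: sj_def m_def take_Suc_conv_app_nth)
  have "foldr (\<circ>) (take (Suc j) ws) id = wj \<circ> sj" unfolding tj foldr_app wj_def by simp
  hence qS: "q (Suc j) = wj (sj p0)" by (simp add: q_def)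
  have qj: "q j = wj p0" by (simp add: q_def wj_def)
  have wjS: "set (take j ws) \<subseteq> S" using ws(2) set_take_subset by (rule order_trans[rotated])
  have wjW: "wj \<in> W" using wordS_W[OF wjS] by (simp add: wj_def)
  obtain \<beta>' k' where b': "\<beta>' \<in> \<Phi>" "\<forall>v. af \<beta> k (wj v) = af \<beta>' k' v" using W_pull[OF wjW] b by blast
  have sep': "af \<beta>' k' p0 * af \<beta>' k' (sj p0) < 0" using j(2) qS qj b'(2) by simp
  obtain \<beta>0 k0 where s0: "sj = srefl \<beta>0 k0" "\<beta>0 \<in> \<Phi>" "is_wall \<Phi> \<xi> (hyp \<beta>0 k0)" using S_wall[OF sjS] by blast
  have "(\<beta>' = \<beta>0 \<and> k' = k0) \<or> (\<beta>' = -\<beta>0 \<and> k' = -k0)"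
    using simple_sep[OF s0(2,3) p0 b'(1)] sep' s0(1) by simp
  hence eqs: "srefl \<beta>' k' = sj" using s0(1) srefl_neg by auto
  have "srefl \<beta> k \<circ> wj = wj \<circ> srefl \<beta>' k'" using W_conj[OF wjW] b b'(2) by blast
  hence conj: "srefl \<beta> k \<circ> wj = wj \<circ> sj" by (simp only: eqs)
  have ss: "sj \<circ> sj = id" using refl_invol sjS S_sub by blast
  have wdec: "w = wj \<circ> sj \<circ> R"
  proof -
    have eq: "ws = take j ws @ sj # drop (Suc j) ws" using j(1) by (simp add: sj_def m_def id_take_nth_drop)
    have "foldr (\<circ>) ws id = foldr (\<circ>) (take j ws @ sj # drop (Suc j) ws) id"
      using arg_cong[OF eq, of "\<lambda>l. foldr (\<circ>) l id"] .
    also have "\<dots> = foldr (\<circ>) (take j ws) id \<circ> foldr (\<circ>) (sj # drop (Suc j) ws) id"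
      by (rule foldr_app)
    finally have "foldr (\<circ>) ws id = foldr (\<circ>) (take j ws) id \<circ> foldr (\<circ>) (sj # drop (Suc j) ws) id" .
    hence "foldr (\<circ>) ws id = wj \<circ> (sj \<circ> R)" by (simp add: R_def wj_def)
    thus ?thesis using ws(3) by (simp add: o_assoc)
  qed
  have "srefl \<beta> k \<circ> w = wj \<circ> R"
  proof -
    have "srefl \<beta> k \<circ> w = (srefl \<beta> k \<circ> wj) \<circ> sj \<circ> R" by (simp add: wdec o_assoc)
    also have "\<dots> = wj \<circ> (sj \<circ> sj) \<circ> R" by (simp add: conj o_assoc)
    also have "\<dots> = wj \<circ> R" using ss by simp
    finally show ?thesis .
  qed
  also have "\<dots> = foldr (\<circ>) (take j ws @ drop (Suc j) ws) id" by (simp only: foldr_app wj_def R_def)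
  finally have e: "srefl \<beta> k \<circ> w = foldr (\<circ>) (take j ws @ drop (Suc j) ws) id" .
  have "set (drop (Suc j) ws) \<subseteq> S" using ws(2) set_drop_subset by (rule order_trans[rotated])
  hence "set (take j ws @ drop (Suc j) ws) \<subseteq> S" using wjS by simp
  hence "len (srefl \<beta> k \<circ> w) \<le> length (take j ws @ drop (Suc j) ws)" unfolding e by (rule len_le)
  also have "\<dots> = m - 1" using j(1) by (simp add: m_def)
  also have "\<dots> < len w" using j(1) ws(1) by (simp add: m_def)
  finally show ?thesis .
qed

lemma C_iff:
  assumes w: "w \<in> W" and b: "\<beta> \<in> \<Phi>" and p0: "p0 \<in> A0"
  shows "len w < len (srefl \<beta> k \<circ> w) \<longleftrightarrow> af \<beta> k p0 * af \<beta> k (w p0) > 0"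
proof
  assume l: "len w < len (srefl \<beta> k \<circ> w)"
  show "af \<beta> k p0 * af \<beta> k (w p0) > 0"
  proof (rule ccontr)
    assume "\<not> ?thesis"
    moreover have "af \<beta> k p0 \<noteq> 0" "af \<beta> k (w p0) \<noteq> 0" using A0_off[OF p0 b] W_off[OF w p0 b] by auto
    ultimately have "af \<beta> k p0 * af \<beta> k (w p0) < 0" by (metis linorder_neqE_linordered_idom mult_eq_0_iff)
    hence "len (srefl \<beta> k \<circ> w) < len w" by (rule C_sep[OF w b p0])
    thus False using l by simp
  qed
next
  assume pos: "af \<beta> k p0 * af \<beta> k (w p0) > 0"
  have "srefl \<beta> k \<in> affine_reflections \<Phi>" using b by (auto simp: affine_reflections_def)
  hence rW: "srefl \<beta> k \<circ> w \<in> W" using w by (rule affine_weyl.step)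
  have "af \<beta> k p0 * af \<beta> k ((srefl \<beta> k \<circ> w) p0) < 0"
    using pos af_srefl_self[OF nz[OF b]] by (simp add: mult_less_0_iff zero_less_mult_iff)
  hence "len (srefl \<beta> k \<circ> (srefl \<beta> k \<circ> w)) < len (srefl \<beta> k \<circ> w)" by (rule C_sep[OF rW b p0])
  moreover have "srefl \<beta> k \<circ> (srefl \<beta> k \<circ> w) = w" using srefl_invol[OF nz[OF b]] by (simp add: fun_eq_iff)
  ultimately show "len w < len (srefl \<beta> k \<circ> w)" by simp
qed

end

lemma inner_srefl_self:
  assumes "\<alpha> \<noteq> 0" shows "inner (srefl \<alpha> m v) \<alpha> = 2 * of_int m - inner v \<alpha>"
  using af_srefl_self[OF assms, of m v] by (simp add: af_def)

theorem proposition4p1: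
  fixes \<Phi> :: "'a::euclidean_space set" and \<xi> \<alpha> :: 'a
    and x :: "'a \<Rightarrow> 'a" and r :: "nat \<Rightarrow> 'a \<Rightarrow> 'a" and n :: nat and c :: int
  assumes "root_system \<Phi>"
    and "\<forall>\<beta>\<in>\<Phi>. inner \<beta> \<xi> \<noteq> 0"
    and "x \<in> affine_weyl \<Phi>"
    and "\<alpha> \<in> \<Phi>"
    and "\<forall>t\<in>{1..n}. r t \<in> affine_reflections \<Phi> \<and> {v. r t v = v} = hyp \<alpha> (c + int t)"
    and "\<forall>t\<in>{1..n}. coxeter_length \<Phi> \<xi> (rprod r t x) > coxeter_length \<Phi> \<xi> (rprod r (t - 1) x)"
  shows "\<forall>t\<in>{3..n}. H1 \<Phi> \<xi> (r (t - 1)) \<subseteq> H1 \<Phi> \<xi> (r t)"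
proof -
  interpret aw \<Phi> \<xi> using assms(1,2) by unfold_locales
  note xW = assms(3) and a = assms(4) and rr = assms(5) and inc = assms(6)
  obtain p0 where p0: "p0 \<in> A0" using A0_ne by blast
  have rt: "r t = srefl \<alpha> (c + int t)" if t: "1 \<le> t" "t \<le> n" for t
  proof -
    have 1: "r t \<in> affine_reflections \<Phi>" "{v. r t v = v} = hyp \<alpha> (c + int t)" using rr t by auto
    obtain \<beta> k where bk: "r t = srefl \<beta> k" "\<beta> \<in> \<Phi>" using 1(1) by (auto simp: affine_reflections_def)
    have "{v. r t v = v} = hyp \<beta> k" using srefl_fix[OF nz[OF bk(2)]] bk(1) by (auto simp: hyp_af)
    hence "hyp \<beta> k = hyp \<alpha> (c + int t)" using 1(2) by simp
    hence "(\<alpha> = \<beta> \<and> c + int t = k) \<or> (\<alpha> = -\<beta> \<and> c + int t = -k)" using hyp_eq_iff[OF bk(2) a] by simp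
    thus ?thesis using bk(1) srefl_neg[of \<beta> k] by auto
  qed
  define y where "y = (\<lambda>t. rprod r t x)"
  have yW: "t \<le> n \<Longrightarrow> y t \<in> W" for t
  proof (induction t)
    case 0 thus ?case using xW by (simp add: y_def)
  next
    case (Suc t)
    have "r (Suc t) \<in> affine_reflections \<Phi>" using rr Suc.prems by auto
    moreover have "rprod r t x \<in> W" using Suc by (simp add: y_def)
    ultimately have "r (Suc t) \<circ> rprod r t x \<in> W" by (rule affine_weyl.step)
    thus ?case unfolding y_def rprod.simps .
  qed
  have ystep: "y t = srefl \<alpha> (c + int t) \<circ> y (t - 1)" if "1 \<le> t" "t \<le> n" for t
  proof -
    define s where "s = t - 1"
    have s: "t = Suc s" using that(1) by (simp add: s_def)
    show ?thesis using rt[OF that] by (simp add: y_def s)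
  qed
  define av where "av = inner p0 \<alpha>"
  define h where "h = (\<lambda>t. inner (y t p0) \<alpha>)"
  have hrec: "h t = 2 * (of_int c + real t) - h (t - 1)" if "1 \<le> t" "t \<le> n" for t
    using ystep[OF that] inner_srefl_self[OF nz[OF a]] by (simp add: h_def)
  have pos: "(av - (of_int c + real t)) * (h (t - 1) - (of_int c + real t)) > 0" if "1 \<le> t" "t \<le> n" for t
  proof -
    have "t \<in> {1..n}" using that by simp
    hence "len (y (t - 1)) < len (y t)" using inc unfolding y_def by blast
    hence "len (y (t - 1)) < len (srefl \<alpha> (c + int t) \<circ> y (t - 1))"
      using ystep[OF that] by simp
    hence "af \<alpha> (c + int t) p0 * af \<alpha> (c + int t) (y (t - 1) p0) > 0"
      using C_iff[OF yW a p0] that by simp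
    thus ?thesis by (simp add: af_def av_def h_def)
  qed
  show ?thesis
  proof (intro ballI subsetI)
    fix t z assume t: "t \<in> {3..n}" and z: "z \<in> H1 \<Phi> \<xi> (r (t - 1))"
    have t3: "3 \<le> t" "t \<le> n" using t by auto
    have zW: "z \<in> W" and zl: "len z < len (r (t - 1) \<circ> z)" using z by (auto simp: H1_def)
    have r1: "r (t - 1) = srefl \<alpha> (c + int (t - 1))" using rt t3 by simp
    have "af \<alpha> (c + int (t - 1)) p0 * af \<alpha> (c + int (t - 1)) (z p0) > 0"
      using C_iff[OF zW a p0] zl r1 by simp
    hence Z: "(av - (of_int c + real t - 1)) * (inner (z p0) \<alpha> - (of_int c + real t - 1)) > 0"
      using t3 by (simp add: af_def av_def of_nat_diff add_diff_eq)
    have P1: "(av - (of_int c + real t - 1)) * (h (t - 2) - (of_int c + real t - 1)) > 0"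
      using pos[of "t - 1"] t3 by (simp add: of_nat_diff numeral_2_eq_2 add_diff_eq)
    have P2: "(av - (of_int c + real t - 2)) * (h (t - 3) - (of_int c + real t - 2)) > 0"
      using pos[of "t - 2"] t3 by (simp add: of_nat_diff numeral_3_eq_3 numeral_2_eq_2 add_diff_eq)
    have R: "h (t - 2) = 2 * (of_int c + real t - 2) - h (t - 3)"
      using hrec[of "t - 2"] t3 by (simp add: of_nat_diff numeral_3_eq_3 numeral_2_eq_2 add_diff_eq)
    have ne: "av \<noteq> of_int c + real t - 1"
    proof
      assume "av = of_int c + real t - 1"
      hence "af \<alpha> (c + int (t - 1)) p0 = 0" using t3 by (simp add: af_def av_def of_nat_diff add_diff_eq)
      thus False using A0_off[OF p0 a] by blast
    qed
    have lt: "av < of_int c + real t - 1"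
    proof (rule ccontr)
      assume "\<not> ?thesis"
      hence gt: "av > of_int c + real t - 1" using ne by simp
      hence "h (t - 2) > of_int c + real t - 1" using P1 by (simp add: zero_less_mult_iff)
      moreover have "h (t - 3) > of_int c + real t - 2"
        using P2 gt by (simp add: zero_less_mult_iff)
      ultimately show False using R by (simp add: algebra_simps)
    qed
    hence "inner (z p0) \<alpha> < of_int c + real t - 1" using Z by (simp add: zero_less_mult_iff)
    hence "af \<alpha> (c + int t) p0 * af \<alpha> (c + int t) (z p0) > 0"
      using lt by (simp add: af_def av_def mult_neg_neg)
    hence "len z < len (srefl \<alpha> (c + int t) \<circ> z)" using C_iff[OF zW a p0] by simp
    thus "z \<in> H1 \<Phi> \<xi> (r t)" using zW rt[of t] t3 by (simp add: H1_def)
  qed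
qed

end
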